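(* Consider an $M/G/1$ queue (i.e., $M^X/G/1$ with batch size $X\equiv 1$) operating under the LCFS-p-resume discipline, with Poisson arrivals of rate $\lambda$, i.i.d. service times distributed as $S$ independent of the arrivals, and $\lambda ES<1$. Let $M$ be the maximum number of customers in the system during a busy period and $P(b)=P(M\leq b)$. Then for all integers $b\geq 1$, $$P(b)=E\big[e^{-\lambda(1-P(b-1))S}\big].$$
   Context: Under LCFS-p-resume, the customer who has been in the system the least amount of time is always served, newly arriving customers preempt the customer in service, service is non-idling, and preempted customers resume service where they left off. *)

theory Defs
  imports "HOL-Probability.Probability" "HOL-Library.Extended_Nat"
begin

text \<open>The state is the stack of remaining service requirements of the
customers present; the head of the list is the customer in service (the one that
arrived most recently).\<close>

fun lcfs_serve :: "real list \<Rightarrow> real \<Rightarrow> real list" where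
  "lcfs_serve [] a = []"
| "lcfs_serve (x # xs) a = (if x \<le> a then lcfs_serve xs (a - x) else (x - a) # xs)"

text \<open>Customer 0 starts the busy period at time 0; A n is the interarrival time
between customer n and customer n+1; S n is the service time of customer n.
lcfs_stack A S n is the system content just after the arrival of customer n.\<close>
fun lcfs_stack :: "(nat \<Rightarrow> real) \<Rightarrow> (nat \<Rightarrow> real) \<Rightarrow> nat \<Rightarrow> real list" where
  "lcfs_stack A S 0 = [S 0]"
| "lcfs_stack A S (Suc n) = S (Suc n) # lcfs_serve (lcfs_stack A S n) (A n)"

definition in_busy_period :: "(nat \<Rightarrow> real) \<Rightarrow> (nat \<Rightarrow> real) \<Rightarrow> nat \<Rightarrow> bool" where
  "in_busy_period A S n \<longleftrightarrow> (\<forall>k<n. lcfs_serve (lcfs_stack A S k) (A k) \<noteq> [])"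

text \<open>Maximum number of customers in the system during the busy period
(the number in system only increases at arrival epochs).\<close>
definition busy_max :: "(nat \<Rightarrow> real) \<Rightarrow> (nat \<Rightarrow> real) \<Rightarrow> enat" where
  "busy_max A S = (SUP n \<in> {n. in_busy_period A S n}. enat (length (lcfs_stack A S n)))"

end

theory Submission
  imports Defs
begin

definition enc :: "real list \<Rightarrow> nat \<times> (nat \<Rightarrow> real)" where
  "enc xs = (length xs, \<lambda>i. if i < length xs then xs ! i else 0)"
definition dec :: "nat \<times> (nat \<Rightarrow> real) \<Rightarrow> real list" where
  "dec p = map (snd p) [0..<fst p]"

lemma dec_enc[simp]: "dec (enc xs) = xs"
  unfolding enc_def dec_def by (rule nth_equalityI) auto

abbreviation CM :: "(nat \<times> (nat \<Rightarrow> real)) measure" where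
  "CM \<equiv> count_space UNIV \<Otimes>\<^sub>M PiM UNIV (\<lambda>_. borel)"

definition lmeas :: "'a measure \<Rightarrow> ('a \<Rightarrow> real list) \<Rightarrow> bool" where
  "lmeas M f \<longleftrightarrow> (\<lambda>w. enc (f w)) \<in> M \<rightarrow>\<^sub>M CM"

lemma dec_meas:
  assumes "\<And>k. (\<lambda>v. g (map v [0..<k])) \<in> PiM UNIV (\<lambda>_. borel) \<rightarrow>\<^sub>M N"
  shows "(\<lambda>p. g (dec p)) \<in> CM \<rightarrow>\<^sub>M N"
proof -
  have "(\<lambda>p. g (map (snd p) [0..<fst p])) \<in> CM \<rightarrow>\<^sub>M N"
    by (rule measurable_pair_measure_countable1) (use assms in auto)
  then show ?thesis unfolding dec_def .
qed

lemma lmeas_out: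
  assumes "lmeas M f" "\<And>k. (\<lambda>v. g (map v [0..<k])) \<in> PiM UNIV (\<lambda>_. borel) \<rightarrow>\<^sub>M N"
  shows "(\<lambda>w. g (f w)) \<in> M \<rightarrow>\<^sub>M N"
proof -
  have "(\<lambda>w. g (dec (enc (f w)))) \<in> M \<rightarrow>\<^sub>M N"
    using measurable_compose[OF assms(1)[unfolded lmeas_def] dec_meas[OF assms(2)]] .
  then show ?thesis by simp
qed

lemma shift_meas[measurable]:
  "(\<lambda>v::nat \<Rightarrow> real. \<lambda>i. v (Suc i)) \<in> PiM UNIV (\<lambda>_. borel) \<rightarrow>\<^sub>M PiM UNIV (\<lambda>_. borel)"
  by (rule measurable_PiM_single') auto

lemma enc_Cons: "enc (x # xs) = (Suc (fst (enc xs)), \<lambda>i. if i = 0 then x else if i < Suc (fst (enc xs)) then snd (enc xs) (i - 1) else 0)"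
  unfolding enc_def by (auto simp: nth_Cons' fun_eq_iff)

lemma Psi_meas:
  "(\<lambda>(x::real, p::nat \<times> (nat \<Rightarrow> real)). (Suc (fst p), \<lambda>i. if i = 0 then x else if i < Suc (fst p) then snd p (i - 1) else 0))
    \<in> borel \<Otimes>\<^sub>M CM \<rightarrow>\<^sub>M CM"
proof -
  have 1: "(\<lambda>q::real \<times> nat \<times> (nat \<Rightarrow> real). Suc (fst (snd q))) \<in> borel \<Otimes>\<^sub>M CM \<rightarrow>\<^sub>M count_space UNIV"
    by measurable
  have 2: "(\<lambda>q::real \<times> nat \<times> (nat \<Rightarrow> real). \<lambda>i. if i = 0 then fst q else if i < Suc (fst (snd q)) then snd (snd q) (i - 1) else 0)
       \<in> borel \<Otimes>\<^sub>M CM \<rightarrow>\<^sub>M PiM UNIV (\<lambda>_. borel)"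
    by (rule measurable_PiM_single') auto
  show ?thesis using measurable_Pair[OF 1 2] by (simp add: case_prod_beta')
qed

lemma lmeas_Cons:
  assumes "lmeas M f" "g \<in> borel_measurable M"
  shows "lmeas M (\<lambda>w. g w # f w)"
proof -
  have "(\<lambda>w. (g w, enc (f w))) \<in> M \<rightarrow>\<^sub>M borel \<Otimes>\<^sub>M CM"
    using assms unfolding lmeas_def by (intro measurable_Pair)
  from measurable_compose[OF this Psi_meas] show ?thesis
    unfolding lmeas_def by (simp only: enc_Cons case_prod_conv)
qed

lemma lmeas_Nil: "lmeas M (\<lambda>w. [])"
  unfolding lmeas_def enc_def by (rule measurable_const) (auto simp: space_pair_measure space_PiM)

lemma fst_comp_meas: "(\<lambda>q::(nat \<Rightarrow> real) \<times> real. fst q i) \<in> borel_measurable (PiM UNIV (\<lambda>_. borel) \<Otimes>\<^sub>M borel)"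
  using measurable_compose[OF measurable_fst measurable_component_singleton[of i UNIV "\<lambda>_. borel"]] by simp

lemma m1: "(\<lambda>q::(nat \<Rightarrow> real) \<times> real. ((\<lambda>i. fst q (Suc i)), snd q - fst q 0)) \<in> PiM UNIV (\<lambda>_. borel) \<Otimes>\<^sub>M borel \<rightarrow>\<^sub>M PiM UNIV (\<lambda>_. borel) \<Otimes>\<^sub>M borel"
proof (rule measurable_Pair)
  show "(\<lambda>q::(nat \<Rightarrow> real) \<times> real. (\<lambda>i. fst q (Suc i))) \<in> PiM UNIV (\<lambda>_. borel) \<Otimes>\<^sub>M borel \<rightarrow>\<^sub>M PiM UNIV (\<lambda>_. borel)"
    using measurable_compose[OF measurable_fst shift_meas] by (simp add: comp_def)
  show "(\<lambda>q::(nat \<Rightarrow> real) \<times> real. snd q - fst q 0) \<in> borel_measurable (PiM UNIV (\<lambda>_. borel) \<Otimes>\<^sub>M borel)"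
    by (intro borel_measurable_diff measurable_snd fst_comp_meas)
qed

lemma m4: "(\<lambda>q::(nat \<Rightarrow> real) \<times> real. \<lambda>i. if i = 0 then fst q 0 - snd q else if i < Suc k then fst q i else 0) \<in> PiM UNIV (\<lambda>_. borel) \<Otimes>\<^sub>M borel \<rightarrow>\<^sub>M PiM UNIV (\<lambda>_. borel)"
proof (rule measurable_PiM_single')
  fix i :: nat
  show "(\<lambda>q::(nat \<Rightarrow> real) \<times> real. if i = 0 then fst q 0 - snd q else if i < Suc k then fst q i else 0) \<in> borel_measurable (PiM UNIV (\<lambda>_. borel) \<Otimes>\<^sub>M borel)"
    using fst_comp_meas[of 0] fst_comp_meas[of i] by (cases "i = 0"; cases "i < Suc k") (auto intro!: borel_measurable_diff measurable_snd)
qed simp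

lemma m5: "{q \<in> space (PiM UNIV (\<lambda>_. borel) \<Otimes>\<^sub>M borel). fst q (0::nat) \<le> (snd q :: real)} \<in> sets (PiM UNIV (\<lambda>_. borel) \<Otimes>\<^sub>M borel)"
  by (intro borel_measurable_le measurable_snd fst_comp_meas)

lemma serve_fixed_meas:
  "(\<lambda>q. enc (lcfs_serve (map (fst q) [0..<k]) (snd q))) \<in> PiM UNIV (\<lambda>_. borel) \<Otimes>\<^sub>M borel \<rightarrow>\<^sub>M CM"
proof (induction k)
  case 0
  have "(\<lambda>q::(nat \<Rightarrow> real) \<times> real. enc (lcfs_serve (map (fst q) [0..<0]) (snd q))) = (\<lambda>q. enc [])" by simp
  moreover have "(\<lambda>q::(nat \<Rightarrow> real) \<times> real. enc []) \<in> PiM UNIV (\<lambda>_. borel) \<Otimes>\<^sub>M borel \<rightarrow>\<^sub>M CM"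
    using lmeas_Nil unfolding lmeas_def .
  ultimately show ?case by simp
next
  case (Suc k)
  have e: "(\<lambda>q. enc (lcfs_serve (map (fst q) [0..<Suc k]) (snd q))) =
    (\<lambda>q. if fst q 0 \<le> snd q then enc (lcfs_serve (map (\<lambda>i. fst q (Suc i)) [0..<k]) (snd q - fst q 0))
         else (Suc k, \<lambda>i. if i = 0 then fst q 0 - snd q else if i < Suc k then fst q i else 0))"
  proof (rule ext)
    fix q :: "(nat \<Rightarrow> real) \<times> real"
    show "enc (lcfs_serve (map (fst q) [0..<Suc k]) (snd q)) = (if fst q 0 \<le> snd q then enc (lcfs_serve (map (\<lambda>i. fst q (Suc i)) [0..<k]) (snd q - fst q 0))
         else (Suc k, \<lambda>i. if i = 0 then fst q 0 - snd q else if i < Suc k then fst q i else 0))"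
    proof (cases "fst q 0 \<le> snd q")
      case True thus ?thesis by (simp del: upt_Suc add: map_upt_Suc)
    next
      case False
      thus ?thesis by (auto simp del: upt_Suc simp add: map_upt_Suc enc_def fun_eq_iff nth_Cons')
    qed
  qed
  have m2: "(\<lambda>q. enc (lcfs_serve (map (\<lambda>i. fst q (Suc i)) [0..<k]) (snd q - fst q 0))) \<in> PiM UNIV (\<lambda>_. borel) \<Otimes>\<^sub>M borel \<rightarrow>\<^sub>M CM"
    using measurable_compose[OF m1 Suc.IH] by simp
  have m4': "(\<lambda>q::(nat \<Rightarrow> real) \<times> real. (Suc k, \<lambda>i. if i = 0 then fst q 0 - snd q else if i < Suc k then fst q i else 0)) \<in> PiM UNIV (\<lambda>_. borel) \<Otimes>\<^sub>M borel \<rightarrow>\<^sub>M CM"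
    by (rule measurable_Pair[OF measurable_const m4]) simp
  show ?case unfolding e
    by (rule measurable_If[OF m2 m4' m5])
qed
lemma lmeas_serve:
  assumes "lmeas M f" "g \<in> borel_measurable M"
  shows "lmeas M (\<lambda>w. lcfs_serve (f w) (g w))"
proof -
  have a: "(\<lambda>q::nat \<times> ((nat \<Rightarrow> real) \<times> real). enc (lcfs_serve (map (fst (snd q)) [0..<fst q]) (snd (snd q))))
     \<in> count_space UNIV \<Otimes>\<^sub>M (PiM UNIV (\<lambda>_. borel) \<Otimes>\<^sub>M borel) \<rightarrow>\<^sub>M CM"
    by (rule measurable_pair_measure_countable1) (use serve_fixed_meas in auto)
  have b: "(\<lambda>w. (fst (enc (f w)), (snd (enc (f w)), g w))) \<in> M \<rightarrow>\<^sub>M count_space UNIV \<Otimes>\<^sub>M (PiM UNIV (\<lambda>_. borel) \<Otimes>\<^sub>M borel)"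
  proof -
    have lm: "(\<lambda>w. enc (f w)) \<in> M \<rightarrow>\<^sub>M CM" using assms(1) unfolding lmeas_def .
    show ?thesis
      using measurable_Pair[OF measurable_compose[OF lm measurable_fst] measurable_Pair[OF measurable_compose[OF lm measurable_snd] assms(2)]]
      by simp
  qed
  have eq: "(\<lambda>w. enc (lcfs_serve (map (snd (enc (f w))) [0..<fst (enc (f w))]) (g w))) = (\<lambda>w. enc (lcfs_serve (f w) (g w)))"
    using dec_enc unfolding dec_def by simp
  from measurable_compose[OF b a] show ?thesis
    unfolding lmeas_def eq[symmetric] by simp
qed

definition stackz :: "nat \<Rightarrow> (nat + nat \<Rightarrow> real) \<Rightarrow> real list" where
  "stackz n z = lcfs_stack (\<lambda>k. z (Inl k)) (\<lambda>k. z (Inr k)) n"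

abbreviation ZM :: "(nat + nat \<Rightarrow> real) measure" where
  "ZM \<equiv> PiM UNIV (\<lambda>_. borel)"

lemma lmeas_stackz: "lmeas ZM (stackz n)"
proof (induction n)
  case 0
  show ?case unfolding stackz_def by simp (rule lmeas_Cons[OF lmeas_Nil], simp)
next
  case (Suc n)
  have "lmeas ZM (\<lambda>z. z (Inr (Suc n)) # lcfs_serve (stackz n z) (z (Inl n)))"
    by (intro lmeas_Cons lmeas_serve Suc) simp_all
  then show ?case unfolding stackz_def by simp
qed


lemma lmeas_compose: "lmeas N f \<Longrightarrow> g \<in> M \<rightarrow>\<^sub>M N \<Longrightarrow> lmeas M (\<lambda>w. f (g w))"
  unfolding lmeas_def by (drule (1) measurable_compose) simp

lemma lmeas_const: "lmeas M (\<lambda>_. xs)"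
  unfolding lmeas_def enc_def by (rule measurable_const) (auto simp: space_pair_measure space_PiM)

fun hh :: "(nat \<Rightarrow> real) \<Rightarrow> real list \<Rightarrow> real" where
  "hh c [] = 1"
| "hh c (x # xs) = exp (- c (Suc (length xs)) * x) * hh c xs"

lemma hh_pos: "0 < hh c xs"
  by (induction xs) auto

lemma hh_le1: "(\<And>j. 0 \<le> c j) \<Longrightarrow> list_all (\<lambda>x. 0 \<le> x) xs \<Longrightarrow> hh c xs \<le> 1"
proof (induction xs)
  case Nil then show ?case by simp
next
  case (Cons x xs)
  have "exp (- c (Suc (length xs)) * x) \<le> 1"
    using Cons.prems by (simp add: mult_nonneg_nonneg)
  moreover have "hh c xs \<le> 1" using Cons by simp
  ultimately show ?case using hh_pos[of c xs] by (simp add: mult_le_one)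
qed

lemma comp_meas_PiM: "(\<lambda>v::nat \<Rightarrow> real. v i) \<in> borel_measurable (PiM UNIV (\<lambda>_. borel))"
  using measurable_component_singleton[of i UNIV "\<lambda>_. borel"] by simp

lemma hh_meas_fixed: "(\<lambda>v. hh c (map v [0..<k])) \<in> borel_measurable (PiM UNIV (\<lambda>_. borel))"
proof (induction k)
  case 0
  have "(\<lambda>v::nat \<Rightarrow> real. hh c (map v [0..<0])) = (\<lambda>v. 1)" by simp
  then show ?case by (simp only:) (rule borel_measurable_const)
next
  case (Suc k)
  have e: "(\<lambda>v. hh c (map v [0..<Suc k])) = (\<lambda>v. exp (- c (Suc k) * v 0) * hh c (map (\<lambda>i. v (Suc i)) [0..<k]))"
    by (simp del: upt_Suc add: map_upt_Suc)
  have m: "(\<lambda>v. hh c (map (\<lambda>i. v (Suc i)) [0..<k])) \<in> borel_measurable (PiM UNIV (\<lambda>_. borel))"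
    by (rule measurable_compose[OF shift_meas Suc.IH])
  have m0: "(\<lambda>v::nat \<Rightarrow> real. exp (- c (Suc k) * v 0)) \<in> borel_measurable (PiM UNIV (\<lambda>_. borel))"
    by (rule measurable_compose[OF borel_measurable_times[OF borel_measurable_const comp_meas_PiM] borel_measurable_exp])
  show ?case unfolding e
    by (rule borel_measurable_times[OF m0 m])
qed

lemma lmeas_hh: "lmeas M f \<Longrightarrow> (\<lambda>w. hh c (f w)) \<in> borel_measurable M"
  by (rule lmeas_out[where g="hh c"], assumption, rule hh_meas_fixed)

lemma lmeas_length: "lmeas M f \<Longrightarrow> (\<lambda>w. length (f w)) \<in> M \<rightarrow>\<^sub>M count_space UNIV"
proof (rule lmeas_out[where g=length], assumption)
  fix k
  have "(\<lambda>v::nat \<Rightarrow> real. length (map v [0..<k])) = (\<lambda>v. k)" by simp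
  then show "(\<lambda>v::nat \<Rightarrow> real. length (map v [0..<k])) \<in> PiM UNIV (\<lambda>_. borel) \<rightarrow>\<^sub>M count_space UNIV"
    by (simp only:) (rule measurable_const, simp)
qed

lemma lmeas_length_pred: "lmeas M f \<Longrightarrow> Measurable.pred M (\<lambda>w. P (length (f w)))"
  using measurable_compose[OF lmeas_length[of M f], of P "count_space UNIV"] by simp

lemma lmeas_Nil_pred: "lmeas M f \<Longrightarrow> Measurable.pred M (\<lambda>w. f w = [])"
proof -
  assume "lmeas M f"
  from lmeas_length_pred[OF this, of "\<lambda>n. n = 0"] show ?thesis by simp
qed

lemma serve_len: "length (lcfs_serve xs a) \<le> length xs"
proof (induction xs arbitrary: a)
  case (Cons x xs)
  show ?case using Cons.IH[of "a - x"] by auto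
qed simp

lemma serve_nonneg: "list_all (\<lambda>x. 0 \<le> x) xs \<Longrightarrow> list_all (\<lambda>x. 0 \<le> x) (lcfs_serve xs a)"
  by (induction xs arbitrary: a) auto

lemma stack_nonneg: "(\<And>k. k \<le> n \<Longrightarrow> 0 \<le> S k) \<Longrightarrow> list_all (\<lambda>x. 0 \<le> x) (lcfs_stack A S n)"
  by (induction n) (auto intro!: serve_nonneg)

lemma stack_ne: "lcfs_stack A S n \<noteq> []"
  by (cases n) auto

lemma stack_dep: "(\<And>k. k < n \<Longrightarrow> A k = A' k) \<Longrightarrow> (\<And>k. k \<le> n \<Longrightarrow> S k = S' k) \<Longrightarrow>
  lcfs_stack A S n = lcfs_stack A' S' n"
  by (induction n) auto

definition alive :: "nat \<Rightarrow> (nat \<Rightarrow> real) \<Rightarrow> (nat \<Rightarrow> real) \<Rightarrow> nat \<Rightarrow> bool" where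
  "alive b A S n \<longleftrightarrow> in_busy_period A S n \<and> (\<forall>k\<le>n. length (lcfs_stack A S k) \<le> b)"

definition succ :: "nat \<Rightarrow> (nat \<Rightarrow> real) \<Rightarrow> (nat \<Rightarrow> real) \<Rightarrow> nat \<Rightarrow> bool" where
  "succ b A S n \<longleftrightarrow> (\<exists>m<n. alive b A S m \<and> lcfs_serve (lcfs_stack A S m) (A m) = [])"

lemma inbp_0[simp]: "in_busy_period A S 0"
  by (simp add: in_busy_period_def)

lemma inbp_Suc: "in_busy_period A S (Suc n) \<longleftrightarrow> in_busy_period A S n \<and> lcfs_serve (lcfs_stack A S n) (A n) \<noteq> []"
  by (auto simp: in_busy_period_def less_Suc_eq)

lemma inbp_mono: "in_busy_period A S n \<Longrightarrow> k \<le> n \<Longrightarrow> in_busy_period A S k"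
  by (auto simp: in_busy_period_def)

lemma alive_0: "alive b A S 0 \<longleftrightarrow> 1 \<le> b"
  by (simp add: alive_def)

lemma alive_Suc: "alive b A S (Suc n) \<longleftrightarrow> alive b A S n \<and> lcfs_serve (lcfs_stack A S n) (A n) \<noteq> [] \<and>
   length (lcfs_stack A S (Suc n)) \<le> b"
  by (auto simp: alive_def inbp_Suc le_Suc_eq)

lemma alive_mono: "alive b A S n \<Longrightarrow> k \<le> n \<Longrightarrow> alive b A S k"
  by (auto simp: alive_def intro: inbp_mono)

lemma succ_0: "\<not> succ b A S 0"
  by (simp add: succ_def)

lemma succ_Suc: "succ b A S (Suc n) \<longleftrightarrow> succ b A S n \<or> (alive b A S n \<and> lcfs_serve (lcfs_stack A S n) (A n) = [])"
  by (auto simp: succ_def less_Suc_eq)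

lemma succ_not_alive: "succ b A S n \<Longrightarrow> \<not> alive b A S n"
  by (auto simp: succ_def alive_def in_busy_period_def)

lemma busy_max_le: "busy_max A S \<le> enat b \<longleftrightarrow> (\<forall>n. in_busy_period A S n \<longrightarrow> length (lcfs_stack A S n) \<le> b)"
  unfolding busy_max_def by (auto simp: SUP_le_iff)

lemma bm_char: "(\<forall>n. in_busy_period A S n \<longrightarrow> length (lcfs_stack A S n) \<le> b) \<longleftrightarrow>
   (\<exists>n. succ b A S n) \<or> (\<forall>n. alive b A S n)"
proof
  assume H: "\<forall>n. in_busy_period A S n \<longrightarrow> length (lcfs_stack A S n) \<le> b"
  show "(\<exists>n. succ b A S n) \<or> (\<forall>n. alive b A S n)"
  proof (cases "\<forall>n. in_busy_period A S n")
    case True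
    then have "\<forall>n. alive b A S n" using H by (auto simp: alive_def)
    then show ?thesis by blast
  next
    case False
    then obtain n where n: "\<not> in_busy_period A S n" by blast
    define m where "m = (LEAST n. \<not> in_busy_period A S n)"
    have m1: "\<not> in_busy_period A S m" unfolding m_def by (rule LeastI[of _ n]) (rule n)
    have m2: "in_busy_period A S k" if "k < m" for k
      using not_less_Least[OF that[unfolded m_def]] by blast
    obtain m' where mm: "m = Suc m'" using m1 by (cases m) auto
    have i: "in_busy_period A S m'" using m2 mm by simp
    have e: "lcfs_serve (lcfs_stack A S m') (A m') = []" using m1 i mm by (simp add: inbp_Suc)
    have "alive b A S m'" using H i by (auto simp: alive_def intro: inbp_mono)
    then have "succ b A S (Suc m')" using e by (auto simp: succ_def)
    then show ?thesis by blast
  qed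
next
  assume "(\<exists>n. succ b A S n) \<or> (\<forall>n. alive b A S n)"
  then show "\<forall>n. in_busy_period A S n \<longrightarrow> length (lcfs_stack A S n) \<le> b"
  proof
    assume "\<exists>n. succ b A S n"
    then obtain n m where m: "m < n" "alive b A S m" "lcfs_serve (lcfs_stack A S m) (A m) = []"
      by (auto simp: succ_def)
    show ?thesis
    proof (intro allI impI)
      fix k assume k: "in_busy_period A S k"
      have "k \<le> m"
      proof (rule ccontr)
        assume "\<not> k \<le> m"
        then show False using k m(3) by (auto simp: in_busy_period_def)
      qed
      then show "length (lcfs_stack A S k) \<le> b" using m(2) by (auto simp: alive_def)
    qed
  next
    assume "\<forall>n. alive b A S n"
    then show ?thesis by (auto simp: alive_def)
  qed
qed

lemma grow:
  assumes "\<And>j. 1 \<le> j \<Longrightarrow> j \<le> b \<Longrightarrow> u < S (n + j) \<and> A (n + j) \<le> u"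
  shows "j \<le> b \<Longrightarrow> Suc j \<le> length (lcfs_stack A S (n + Suc j))"
proof (induction j)
  case 0 then show ?case by simp
next
  case (Suc j)
  have lt: "u < S (n + Suc j)" "A (n + Suc j) \<le> u" using assms[of "Suc j"] Suc.prems by auto
  have "lcfs_serve (lcfs_stack A S (n + Suc j)) (A (n + Suc j)) = (S (n + Suc j) - A (n + Suc j)) # lcfs_serve (lcfs_stack A S (n + j)) (A (n + j))"
    using lt by simp
  moreover have "lcfs_stack A S (n + Suc j) = S (n + Suc j) # lcfs_serve (lcfs_stack A S (n + j)) (A (n + j))"
    by simp
  ultimately have "length (lcfs_stack A S (n + Suc (Suc j))) = Suc (length (lcfs_stack A S (n + Suc j)))"
    by (simp only: add_Suc_right lcfs_stack.simps length_Cons)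
  then show ?case using Suc by simp
qed

lemma grow_not_alive:
  assumes "\<And>j. 1 \<le> j \<Longrightarrow> j \<le> b \<Longrightarrow> u < S (n + j) \<and> A (n + j) \<le> u"
  shows "\<not> alive b A S (n + Suc b)"
proof -
  have "Suc b \<le> length (lcfs_stack A S (n + Suc b))"
    by (rule grow[where b=b and u=u and S=S and n=n and A=A]) (use assms in auto)
  then show ?thesis by (auto simp: alive_def)
qed


lemma stackz_Suc: "stackz (Suc n) z = z (Inr (Suc n)) # lcfs_serve (stackz n z) (z (Inl n))"
  by (simp add: stackz_def)

lemma comp_meas_ZM: "(\<lambda>z::nat + nat \<Rightarrow> real. z i) \<in> borel_measurable ZM"
  using measurable_component_singleton[of i UNIV "\<lambda>_. borel"] by simp

lemma lmeas_serve_z: "lmeas ZM (\<lambda>z. lcfs_serve (stackz k z) (z (Inl k)))"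
  by (intro lmeas_serve lmeas_stackz comp_meas_ZM)

lemma pred_inbp: "Measurable.pred ZM (\<lambda>z. in_busy_period (\<lambda>k. z (Inl k)) (\<lambda>k. z (Inr k)) n)"
proof -
  have e: "(\<lambda>z. in_busy_period (\<lambda>k. z (Inl k)) (\<lambda>k. z (Inr k)) n) =
     (\<lambda>z. \<forall>k\<in>{..<n}. \<not> (lcfs_serve (stackz k z) (z (Inl k)) = []))"
    by (auto simp: in_busy_period_def stackz_def fun_eq_iff)
  show ?thesis unfolding e
    by (intro pred_intros_finite(3) finite_lessThan pred_intros_logic(2) lmeas_Nil_pred lmeas_serve_z)
qed

lemma pred_alive: "Measurable.pred ZM (\<lambda>z. alive b (\<lambda>k. z (Inl k)) (\<lambda>k. z (Inr k)) n)"
proof -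
  have e: "(\<lambda>z. alive b (\<lambda>k. z (Inl k)) (\<lambda>k. z (Inr k)) n) =
     (\<lambda>z. in_busy_period (\<lambda>k. z (Inl k)) (\<lambda>k. z (Inr k)) n \<and> (\<forall>k\<in>{..n}. length (stackz k z) \<le> b))"
    by (auto simp: alive_def stackz_def fun_eq_iff)
  show ?thesis unfolding e
    by (intro pred_intros_logic(3) pred_inbp pred_intros_finite(3) finite_atMost lmeas_length_pred lmeas_stackz)
qed

lemma pred_succ: "Measurable.pred ZM (\<lambda>z. succ b (\<lambda>k. z (Inl k)) (\<lambda>k. z (Inr k)) n)"
proof -
  have e: "(\<lambda>z. succ b (\<lambda>k. z (Inl k)) (\<lambda>k. z (Inr k)) n) =
     (\<lambda>z. \<exists>m\<in>{..<n}. alive b (\<lambda>k. z (Inl k)) (\<lambda>k. z (Inr k)) m \<and> lcfs_serve (stackz m z) (z (Inl m)) = [])"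
    by (auto simp: succ_def stackz_def fun_eq_iff)
  show ?thesis unfolding e
    by (intro pred_intros_finite(4) finite_lessThan pred_intros_logic(3) pred_alive lmeas_Nil_pred lmeas_serve_z)
qed

lemma pred_bm: "Measurable.pred ZM (\<lambda>z. busy_max (\<lambda>k. z (Inl k)) (\<lambda>k. z (Inr k)) \<le> enat b)"
proof -
  have e: "(\<lambda>z. busy_max (\<lambda>k. z (Inl k)) (\<lambda>k. z (Inr k)) \<le> enat b) =
     (\<lambda>z. \<forall>n. in_busy_period (\<lambda>k. z (Inl k)) (\<lambda>k. z (Inr k)) n \<longrightarrow> length (stackz n z) \<le> b)"
    by (auto simp: busy_max_le stackz_def fun_eq_iff)
  show ?thesis unfolding e
    by (intro pred_intros_countable(1) pred_intros_logic(4) pred_inbp lmeas_length_pred lmeas_stackz)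
qed


definition W :: "(nat \<Rightarrow> real) \<Rightarrow> (nat \<Rightarrow> real) \<Rightarrow> nat \<Rightarrow> real list \<Rightarrow> ennreal" where
  "W Q c b ys = (if ys = [] then 1 else ennreal (Q (b - length ys) * hh c ys))"

lemma lmeas_W: "lmeas M f \<Longrightarrow> (\<lambda>w. W Q c b (f w)) \<in> borel_measurable M"
proof (rule lmeas_out[where g="W Q c b"], assumption)
  fix k
  show "(\<lambda>v. W Q c b (map v [0..<k])) \<in> borel_measurable (PiM UNIV (\<lambda>_. borel))"
  proof (cases "k = 0")
    case True
    then have "(\<lambda>v::nat \<Rightarrow> real. W Q c b (map v [0..<k])) = (\<lambda>v. 1)" by (simp add: W_def)
    then show ?thesis by (simp only:) (rule borel_measurable_const)
  next
    case False
    then have "(\<lambda>v::nat \<Rightarrow> real. W Q c b (map v [0..<k])) = (\<lambda>v. ennreal (Q (b - k) * hh c (map v [0..<k])))"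
      by (simp add: W_def fun_eq_iff)
    then show ?thesis
      by (simp only:) (rule measurable_compose[OF borel_measurable_times[OF borel_measurable_const hh_meas_fixed] measurable_ennreal])
  qed
qed

lemma id_borel: "(\<lambda>a::real. a) \<in> borel_measurable borel"
  by (rule measurable_ident_sets) simp

lemma lmeas_serve_const: "lmeas borel (\<lambda>a. lcfs_serve xs (a - x))"
  by (rule lmeas_serve[OF lmeas_const borel_measurable_diff[OF id_borel borel_measurable_const]])

lemma lmeas_serve_const': "lmeas borel (\<lambda>a. lcfs_serve xs a)"
  by (rule lmeas_serve[OF lmeas_const id_borel])

lemma dens_meas: "(\<lambda>a. ennreal (exponential_density lam a)) \<in> borel_measurable borel"
  by (rule measurable_compose[OF borel_measurable_erlang_density measurable_ennreal])

lemma dens_total: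
  assumes lam: "0 < lam"
  shows "(\<integral>\<^sup>+ a. ennreal (exponential_density lam a) \<partial>lborel) = 1"
proof -
  have "emeasure (density lborel (\<lambda>x. ennreal (exponential_density lam x))) (space lborel) = 1"
    using prob_space.emeasure_space_1[OF prob_space_exponential_density[OF lam]] by simp
  then show ?thesis
    by (subst (asm) emeasure_density) (auto intro: dens_meas)
qed

lemma analytic:
  fixes Q :: "nat \<Rightarrow> real" and lam :: real
  assumes lam: "0 < lam" and Q: "\<And>m. 0 \<le> Q m" "\<And>m. Q m \<le> 1" and Q0: "Q 0 = 0"
    and cdef: "c = (\<lambda>j. lam * (1 - Q (b - j)))"
  shows "list_all (\<lambda>x. 0 \<le> x) xs \<Longrightarrow> length xs \<le> b \<Longrightarrow>
    (\<integral>\<^sup>+ a. ennreal (exponential_density lam a) * W Q c b (lcfs_serve xs a) \<partial>lborel) = ennreal (hh c xs)"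
proof (induction xs)
  case Nil
  then show ?case using dens_total[OF lam] by (simp add: W_def)
next
  case (Cons x zs)
  define k where "k = Suc (length zs)"
  define H where "H = hh c zs"
  define C where "C = c k"
  define q where "q = Q (b - k)"
  have x0: "0 \<le> x" and zs0: "list_all (\<lambda>x. 0 \<le> x) zs" using Cons.prems by auto
  have kb: "length zs \<le> b" using Cons.prems by simp
  have H0: "0 < H" unfolding H_def by (rule hh_pos)
  have q0: "0 \<le> q" "q \<le> 1" unfolding q_def using Q by auto
  have Cq: "C + lam * q = lam" unfolding C_def cdef q_def by (simp add: algebra_simps)
  define g where "g = (\<lambda>a. lam * q * H * exp (- C * x) * exp (- (lam * q) * a))"
  define F where "F = (\<lambda>a. - (H * exp (- C * x) * exp (- (lam * q) * a)))"
  let ?d = "\<lambda>a. ennreal (exponential_density lam a)"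
  have split: "?d a * W Q c b (lcfs_serve (x # zs) a) =
      indicator {..<x} a * (?d a * W Q c b ((x - a) # zs)) + indicator {x..} a * (?d a * W Q c b (lcfs_serve zs (a - x)))" for a
    by (cases "x \<le> a") (auto simp: indicator_def)
  have m1: "(\<lambda>a. indicator {..<x} a * (?d a * W Q c b ((x - a) # zs))) \<in> borel_measurable borel"
  proof -
    have "lmeas borel (\<lambda>a. (x - a) # zs)"
      by (rule lmeas_Cons[OF lmeas_const borel_measurable_diff[OF borel_measurable_const id_borel]])
    note [measurable] = lmeas_W[OF this] dens_meas
    show ?thesis by measurable
  qed
  have m2: "(\<lambda>a. indicator {x..} a * (?d a * W Q c b (lcfs_serve zs (a - x)))) \<in> borel_measurable borel"
    using lmeas_W[OF lmeas_serve_const] dens_meas by measurable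
  have p1: "(\<integral>\<^sup>+ a. indicator {..<x} a * (?d a * W Q c b ((x - a) # zs)) \<partial>lborel) = ennreal (F x - F 0)"
  proof -
    have "(\<integral>\<^sup>+ a. indicator {..<x} a * (?d a * W Q c b ((x - a) # zs)) \<partial>lborel) =
          (\<integral>\<^sup>+ a. ennreal (g a) * indicator {0..x} a \<partial>lborel)"
    proof (rule nn_integral_cong_AE)
      show "AE a in lborel. indicator {..<x} a * (?d a * W Q c b ((x - a) # zs)) = ennreal (g a) * indicator {0..x} a"
        using AE_lborel_singleton[of x]
      proof eventually_elim
        case (elim a)
        show ?case
        proof (cases "0 \<le> a \<and> a < x")
          case True
          have h: "a * C + a * (lam * q) = a * lam" using Cq by (metis distrib_left)
          have "- (a * lam) + - C * (x - a) = - C * x + - (lam * q) * a"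
            using h by (simp add: algebra_simps)
          then have ee: "exp (- (a * lam)) * exp (- C * (x - a)) = exp (- C * x) * exp (- (lam * q) * a)"
            by (simp only: mult_exp_exp)
          have "exponential_density lam a * (Q (b - k) * (exp (- c k * (x - a)) * H)) = 
              lam * q * H * (exp (- (a * lam)) * exp (- C * (x - a)))"
            using True unfolding C_def q_def by (simp add: exponential_density_def algebra_simps)
          also have "\<dots> = g a" unfolding g_def ee by (simp add: algebra_simps)
          finally have "exponential_density lam a * (Q (b - k) * (exp (- c k * (x - a)) * H)) = g a" .
          note eg = this
          have "?d a * W Q c b ((x - a) # zs) = ?d a * ennreal (Q (b - k) * (exp (- c k * (x - a)) * H))"
            by (simp add: W_def k_def H_def)
          also have "\<dots> = ennreal (exponential_density lam a * (Q (b - k) * (exp (- c k * (x - a)) * H)))"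
            by (rule ennreal_mult'[symmetric]) (use lam in \<open>simp add: exponential_density_def\<close>)
          finally have "?d a * W Q c b ((x - a) # zs) = ennreal (g a)" unfolding eg .
          then show ?thesis using True by (simp add: indicator_def)
        next
          case False
          then show ?thesis using elim by (auto simp: indicator_def exponential_density_def)
        qed
      qed
    qed
    also have "\<dots> = ennreal (F x - F 0)"
    proof (rule nn_integral_FTC_Icc)
      show "g \<in> borel_measurable borel" unfolding g_def by measurable
      show "(F has_real_derivative g a) (at a)" for a
        unfolding F_def g_def by (auto intro!: derivative_eq_intros simp: algebra_simps)
      show "0 \<le> g a" for a unfolding g_def using lam q0 H0 by simp
      show "0 \<le> x" by (rule x0)
    qed
    finally show ?thesis .
  qed
  have p2: "(\<integral>\<^sup>+ a. indicator {x..} a * (?d a * W Q c b (lcfs_serve zs (a - x))) \<partial>lborel) = ennreal (exp (- lam * x) * H)"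
  proof -
    have "(\<integral>\<^sup>+ a. indicator {x..} a * (?d a * W Q c b (lcfs_serve zs (a - x))) \<partial>lborel) =
       ennreal \<bar>1\<bar> * (\<integral>\<^sup>+ a. indicator {x..} (x + 1 * a) * (?d (x + 1 * a) * W Q c b (lcfs_serve zs ((x + 1 * a) - x))) \<partial>lborel)"
      by (rule nn_integral_real_affine[OF m2]) simp
    also have "\<dots> = (\<integral>\<^sup>+ a. indicator {x..} (x + a) * (?d (x + a) * W Q c b (lcfs_serve zs a)) \<partial>lborel)"
      by (simp only: abs_one ennreal_1 mult_1 mult_1_left add_diff_cancel_left')
    also have "\<dots> = (\<integral>\<^sup>+ a. ennreal (exp (- lam * x)) * (?d a * W Q c b (lcfs_serve zs a)) \<partial>lborel)"
    proof (rule nn_integral_cong)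
      fix a :: real
      show "indicator {x..} (x + a) * (?d (x + a) * W Q c b (lcfs_serve zs a)) = ennreal (exp (- lam * x)) * (?d a * W Q c b (lcfs_serve zs a))"
      proof (cases "0 \<le> a")
        case True
        have "exponential_density lam (x + a) = exp (- lam * x) * exponential_density lam a"
          using True x0 by (simp add: exponential_density_def mult_exp_exp algebra_simps)
        then show ?thesis using True lam
          by (simp add: indicator_def ennreal_mult mult.assoc)
      next
        case False
        then show ?thesis by (simp add: indicator_def exponential_density_def)
      qed
    qed
    also have "\<dots> = ennreal (exp (- lam * x)) * (\<integral>\<^sup>+ a. ?d a * W Q c b (lcfs_serve zs a) \<partial>lborel)"
      by (rule nn_integral_cmult) (simp only: measurable_lborel2, rule borel_measurable_times_ennreal[OF dens_meas lmeas_W[OF lmeas_serve_const']])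
    also have "\<dots> = ennreal (exp (- lam * x)) * ennreal H"
      using Cons.IH[OF zs0 kb] unfolding H_def by simp
    finally show ?thesis by (simp add: ennreal_mult')
  qed
  have "(\<integral>\<^sup>+ a. ?d a * W Q c b (lcfs_serve (x # zs) a) \<partial>lborel) =
     (\<integral>\<^sup>+ a. indicator {..<x} a * (?d a * W Q c b ((x - a) # zs)) \<partial>lborel) +
     (\<integral>\<^sup>+ a. indicator {x..} a * (?d a * W Q c b (lcfs_serve zs (a - x))) \<partial>lborel)"
    unfolding split by (rule nn_integral_add) (simp_all only: measurable_lborel2 m1 m2)
  also have "\<dots> = ennreal (F x - F 0) + ennreal (exp (- lam * x) * H)"
    using p1 p2 by simp
  also have "\<dots> = ennreal (F x - F 0 + exp (- lam * x) * H)"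
  proof (rule ennreal_plus[symmetric])
    have "exp (- (lam * q) * x) \<le> 1" using lam q0 x0 by simp
    then show "0 \<le> F x - F 0" unfolding F_def using H0
      by (simp add: algebra_simps mult_left_le)
    show "0 \<le> exp (- lam * x) * H" using H0 by simp
  qed
  also have "F x - F 0 + exp (- lam * x) * H = hh c (x # zs)"
  proof -
    have h: "- C * x + - (lam * q) * x = - lam * x"
    proof -
      have "- C * x + - (lam * q) * x = - (C + lam * q) * x" by (simp add: algebra_simps)
      then show ?thesis using Cq by simp
    qed
    have "exp (- C * x) * exp (- (lam * q) * x) = exp (- lam * x)"
      by (simp only: mult_exp_exp h)
    then show ?thesis unfolding F_def H_def C_def k_def by (simp add: algebra_simps)
  qed
  finally show ?case .
qed


definition Kset :: "nat \<Rightarrow> (nat + nat) set" where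
  "Kset n = Inl ` {..<n} \<union> Inr ` {..n}"

definition upd :: "nat \<Rightarrow> (nat + nat \<Rightarrow> real) \<Rightarrow> real \<Rightarrow> real \<Rightarrow> (nat + nat \<Rightarrow> real)" where
  "upd n z a s = z(Inl n := a, Inr (Suc n) := s)"

lemma Kset_Suc: "Kset (Suc n) = Kset n \<union> {Inl n, Inr (Suc n)}"
  unfolding Kset_def by (auto simp: lessThan_Suc atMost_Suc)

lemma Kset_disj: "Kset n \<inter> {Inl n, Inr (Suc n)} = {}"
  unfolding Kset_def by auto

lemma upd_meas: "(\<lambda>p. upd n (fst p) (fst (snd p)) (snd (snd p))) \<in> ZM \<Otimes>\<^sub>M (borel \<Otimes>\<^sub>M borel) \<rightarrow>\<^sub>M ZM"
proof (rule measurable_PiM_single')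
  fix i :: "nat + nat"
  have c: "(\<lambda>p::(nat + nat \<Rightarrow> real) \<times> real \<times> real. fst p i) \<in> borel_measurable (ZM \<Otimes>\<^sub>M (borel \<Otimes>\<^sub>M borel))"
    by (rule measurable_compose[OF measurable_fst comp_meas_ZM])
  have a: "(\<lambda>p::(nat + nat \<Rightarrow> real) \<times> real \<times> real. fst (snd p)) \<in> borel_measurable (ZM \<Otimes>\<^sub>M (borel \<Otimes>\<^sub>M borel))"
    by (rule measurable_compose[OF measurable_snd measurable_fst])
  have s: "(\<lambda>p::(nat + nat \<Rightarrow> real) \<times> real \<times> real. snd (snd p)) \<in> borel_measurable (ZM \<Otimes>\<^sub>M (borel \<Otimes>\<^sub>M borel))"
    by (rule measurable_compose[OF measurable_snd measurable_snd])
  show "(\<lambda>p. upd n (fst p) (fst (snd p)) (snd (snd p)) i) \<in> borel_measurable (ZM \<Otimes>\<^sub>M (borel \<Otimes>\<^sub>M borel))"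
  proof (cases "i = Inl n")
    case True
    then have "(\<lambda>p::(nat + nat \<Rightarrow> real) \<times> real \<times> real. upd n (fst p) (fst (snd p)) (snd (snd p)) i) = (\<lambda>p. fst (snd p))"
      by (simp add: upd_def fun_eq_iff)
    then show ?thesis using a by (simp only:)
  next
    case F1: False
    show ?thesis
    proof (cases "i = Inr (Suc n)")
      case True
      then have "(\<lambda>p::(nat + nat \<Rightarrow> real) \<times> real \<times> real. upd n (fst p) (fst (snd p)) (snd (snd p)) i) = (\<lambda>p. snd (snd p))"
        by (simp add: upd_def fun_eq_iff)
      then show ?thesis using s by (simp only:)
    next
      case False
      then have "(\<lambda>p::(nat + nat \<Rightarrow> real) \<times> real \<times> real. upd n (fst p) (fst (snd p)) (snd (snd p)) i) = (\<lambda>p. fst p i)"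
        using F1 by (simp add: upd_def fun_eq_iff)
      then show ?thesis using c by (simp only:)
    qed
  qed
qed simp

definition ext :: "(nat + nat) set \<Rightarrow> (nat + nat \<Rightarrow> real) \<Rightarrow> (nat + nat \<Rightarrow> real)" where
  "ext K x = (\<lambda>i. if i \<in> K then x i else 0)"

lemma ext_meas: "ext K \<in> PiM K (\<lambda>_. borel) \<rightarrow>\<^sub>M ZM"
  unfolding ext_def
proof (rule measurable_PiM_single')
  fix i :: "nat + nat"
  show "(\<lambda>x. if i \<in> K then x i else 0) \<in> borel_measurable (PiM K (\<lambda>_. borel))"
  proof (cases "i \<in> K")
    case True
    then have eq1: "(\<lambda>x::nat + nat \<Rightarrow> real. if i \<in> K then x i else 0) = (\<lambda>x. x i)" by simp
    show ?thesis by (simp only: True if_True) (rule measurable_component_singleton[OF True])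
  next
    case False
    then have "(\<lambda>x::nat + nat \<Rightarrow> real. if i \<in> K then x i else 0) = (\<lambda>x. 0)" by simp
    show ?thesis by (simp only: False if_False) (rule borel_measurable_const)
  qed
qed simp

locale qsys = prob_space Pr for Pr :: "'w measure" +
  fixes lam :: real and A S :: "nat \<Rightarrow> 'w \<Rightarrow> real"
  assumes lam_pos: "0 < lam"
    and indep: "indep_vars (\<lambda>_. borel) (\<lambda>i. case i of Inl n \<Rightarrow> A n | Inr n \<Rightarrow> S n) UNIV"
    and arr: "\<And>n. distributed Pr lborel (A n) (exponential_density lam)"
    and S_ident: "\<And>n. distr Pr borel (S n) = distr Pr borel (S 0)"
    and S_nonneg: "\<And>n. AE w in Pr. 0 \<le> S n w"
begin

definition Xf :: "nat + nat \<Rightarrow> 'w \<Rightarrow> real" where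
  "Xf = (\<lambda>i. case i of Inl n \<Rightarrow> A n | Inr n \<Rightarrow> S n)"

definition zf :: "'w \<Rightarrow> nat + nat \<Rightarrow> real" where
  "zf w = (\<lambda>i. Xf i w)"

lemma Xf_meas: "Xf i \<in> borel_measurable Pr"
  using indep unfolding indep_vars_def Xf_def by blast

lemma A_meas: "A n \<in> borel_measurable Pr"
proof -
  have "Xf (Inl n) = A n" by (simp add: Xf_def)
  then show ?thesis using Xf_meas[of "Inl n"] by (simp only:)
qed

lemma S_meas: "S n \<in> borel_measurable Pr"
proof -
  have "Xf (Inr n) = S n" by (simp add: Xf_def)
  then show ?thesis using Xf_meas[of "Inr n"] by (simp only:)
qed

lemma zf_meas: "zf \<in> Pr \<rightarrow>\<^sub>M ZM"
  unfolding zf_def by (rule measurable_PiM_single') (rule Xf_meas, simp)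

lemma zf_Inl[simp]: "zf w (Inl k) = A k w" and zf_Inr[simp]: "zf w (Inr k) = S k w"
  by (simp_all add: zf_def Xf_def)

lemma indep': "indep_vars (\<lambda>_. borel) Xf UNIV"
  using indep unfolding Xf_def .

abbreviation LS where "LS \<equiv> distr Pr borel (S 0)"
abbreviation DA where "DA n \<equiv> distr Pr borel (A n)"

lemma AS_indep: "distr Pr (borel \<Otimes>\<^sub>M borel) (\<lambda>w. (A n w, S (Suc n) w)) = DA n \<Otimes>\<^sub>M LS"
proof -
  have i1: "indep_var (PiM {Inl n} (\<lambda>_. borel)) (\<lambda>w. restrict (\<lambda>i. Xf i w) {Inl n})
                       (PiM {Inr (Suc n)} (\<lambda>_. borel)) (\<lambda>w. restrict (\<lambda>i. Xf i w) {Inr (Suc n)})"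
    by (rule indep_var_restrict[OF indep']) auto
  have i2: "indep_var borel ((\<lambda>y. y (Inl n)) \<circ> (\<lambda>w. restrict (\<lambda>i. Xf i w) {Inl n}))
                       borel ((\<lambda>y. y (Inr (Suc n))) \<circ> (\<lambda>w. restrict (\<lambda>i. Xf i w) {Inr (Suc n)}))"
    by (rule indep_var_compose[OF i1]; rule measurable_component_singleton; simp)
  have e1: "((\<lambda>y. y (Inl n)) \<circ> (\<lambda>w. restrict (\<lambda>i. Xf i w) {Inl n})) = A n"
    by (auto simp: Xf_def fun_eq_iff)
  have e2: "((\<lambda>y. y (Inr (Suc n))) \<circ> (\<lambda>w. restrict (\<lambda>i. Xf i w) {Inr (Suc n)})) = S (Suc n)"
    by (auto simp: Xf_def fun_eq_iff)
  have "indep_var borel (A n) borel (S (Suc n))" using i2 unfolding e1 e2 .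
  then have "DA n \<Otimes>\<^sub>M distr Pr borel (S (Suc n)) = distr Pr (borel \<Otimes>\<^sub>M borel) (\<lambda>w. (A n w, S (Suc n) w))"
    unfolding indep_var_distribution_eq by blast
  then show ?thesis unfolding S_ident[of "Suc n"] by (rule sym)
qed

lemma one_step:
  assumes Phim: "Phi \<in> borel_measurable ZM"
    and dep: "\<And>z z'. (\<forall>i\<in>Kset (Suc n). z i = z' i) \<Longrightarrow> Phi z = Phi z'"
  shows "(\<integral>\<^sup>+ w. Phi (zf w) \<partial>Pr) =
     (\<integral>\<^sup>+ w. (\<integral>\<^sup>+ a. (\<integral>\<^sup>+ s. Phi (upd n (zf w) a s) \<partial>LS) \<partial>DA n) \<partial>Pr)"
proof -
  define K where "K = Kset n"
  define PK where "PK = PiM K (\<lambda>_::nat + nat. borel :: real measure)"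
  define Xp where "Xp = (\<lambda>w. restrict (\<lambda>i. Xf i w) K)"
  define Yp where "Yp = (\<lambda>w. (A n w, S (Suc n) w))"
  define Psi where "Psi = (\<lambda>p::(nat + nat \<Rightarrow> real) \<times> real \<times> real. Phi (upd n (ext K (fst p)) (fst (snd p)) (snd (snd p))))"
  have KL: "K \<inter> {Inl n, Inr (Suc n)} = {}" unfolding K_def by (rule Kset_disj)
  have i1: "indep_var PK Xp (PiM {Inl n, Inr (Suc n)} (\<lambda>_. borel)) (\<lambda>w. restrict (\<lambda>i. Xf i w) {Inl n, Inr (Suc n)})"
    unfolding PK_def Xp_def by (rule indep_var_restrict[OF indep' KL]) auto
  define PL where "PL = PiM {Inl n, Inr (Suc n)} (\<lambda>_::nat + nat. borel :: real measure)"
  define Yr where "Yr = (\<lambda>w. restrict (\<lambda>i. Xf i w) {Inl n, Inr (Suc n)})"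
  define Psi2 where "Psi2 = (\<lambda>p::(nat + nat \<Rightarrow> real) \<times> (nat + nat \<Rightarrow> real). Psi (fst p, (snd p (Inl n), snd p (Inr (Suc n)))))"
  have i3: "indep_var PK Xp PL Yr" using i1 unfolding PL_def Yr_def .
  have Xpm: "Xp \<in> Pr \<rightarrow>\<^sub>M PK" and Yrm: "Yr \<in> Pr \<rightarrow>\<^sub>M PL"
    using i3 unfolding indep_var_distribution_eq by blast+
  have Ypm: "Yp \<in> Pr \<rightarrow>\<^sub>M borel \<Otimes>\<^sub>M borel"
    unfolding Yp_def by (rule measurable_Pair[OF A_meas S_meas])
  have "distr Pr PK Xp \<Otimes>\<^sub>M distr Pr PL Yr = distr Pr (PK \<Otimes>\<^sub>M PL) (\<lambda>w. (Xp w, Yr w))"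
    using i3 unfolding indep_var_distribution_eq by blast
  then have joint: "distr Pr (PK \<Otimes>\<^sub>M PL) (\<lambda>w. (Xp w, Yr w)) = distr Pr PK Xp \<Otimes>\<^sub>M distr Pr PL Yr"
    by (rule sym)
  have Y2: "(\<lambda>y. (y (Inl n), y (Inr (Suc n)))) \<in> PL \<rightarrow>\<^sub>M borel \<Otimes>\<^sub>M (borel :: real measure)"
    unfolding PL_def by (rule measurable_Pair; rule measurable_component_singleton; simp)
  have sfL: "sigma_finite_measure (distr Pr PL Yr)"
    by (intro prob_space_imp_sigma_finite prob_space_distr Yrm)
  have sfS: "sigma_finite_measure LS"
    by (intro prob_space_imp_sigma_finite prob_space_distr S_meas)
  have sfA: "sigma_finite_measure (DA n)"
    by (intro prob_space_imp_sigma_finite prob_space_distr A_meas)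
  have Psim: "Psi \<in> borel_measurable (PK \<Otimes>\<^sub>M (borel \<Otimes>\<^sub>M borel))"
  proof -
    have "(\<lambda>p::(nat + nat \<Rightarrow> real) \<times> real \<times> real. (ext K (fst p), snd p)) \<in> PK \<Otimes>\<^sub>M (borel \<Otimes>\<^sub>M borel) \<rightarrow>\<^sub>M ZM \<Otimes>\<^sub>M (borel \<Otimes>\<^sub>M borel)"
      unfolding PK_def by (rule measurable_Pair[OF measurable_compose[OF measurable_fst ext_meas] measurable_snd])
    from measurable_compose[OF measurable_compose[OF this upd_meas] Phim]
    show ?thesis unfolding Psi_def by (simp only: fst_conv snd_conv)
  qed
  have Psi2m: "Psi2 \<in> borel_measurable (PK \<Otimes>\<^sub>M PL)"
  proof -
    have "(\<lambda>p::(nat + nat \<Rightarrow> real) \<times> (nat + nat \<Rightarrow> real). (fst p, (snd p (Inl n), snd p (Inr (Suc n))))) \<in> PK \<Otimes>\<^sub>M PL \<rightarrow>\<^sub>M PK \<Otimes>\<^sub>M (borel \<Otimes>\<^sub>M borel)"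
      by (rule measurable_Pair[OF measurable_fst measurable_compose[OF measurable_snd Y2]])
    from measurable_compose[OF this Psim] show ?thesis unfolding Psi2_def .
  qed
  have eqs2: "measurable (DA n \<Otimes>\<^sub>M LS) (borel :: ennreal measure) = measurable (borel \<Otimes>\<^sub>M borel) borel"
    by (rule measurable_cong_sets[OF sets_pair_measure_cong[OF sets_distr sets_distr] refl])
  have eqs3: "measurable ((PK \<Otimes>\<^sub>M DA n) \<Otimes>\<^sub>M LS) (PK \<Otimes>\<^sub>M (borel \<Otimes>\<^sub>M borel)) = measurable ((PK \<Otimes>\<^sub>M borel) \<Otimes>\<^sub>M borel) (PK \<Otimes>\<^sub>M (borel \<Otimes>\<^sub>M borel))"
    by (rule measurable_cong_sets[OF sets_pair_measure_cong[OF sets_pair_measure_cong[OF refl sets_distr] sets_distr] refl])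
  have step1: "(\<integral>\<^sup>+ w. Phi (zf w) \<partial>Pr) = (\<integral>\<^sup>+ w. Psi2 (Xp w, Yr w) \<partial>Pr)"
  proof (rule nn_integral_cong)
    fix w
    show "Phi (zf w) = Psi2 (Xp w, Yr w)"
      unfolding Psi2_def Psi_def
    proof (rule dep, intro ballI)
      fix i assume "i \<in> Kset (Suc n)"
      then show "zf w i = upd n (ext K (fst (fst (Xp w, Yr w), snd (Xp w, Yr w) (Inl n), snd (Xp w, Yr w) (Inr (Suc n)))))
           (fst (snd (fst (Xp w, Yr w), snd (Xp w, Yr w) (Inl n), snd (Xp w, Yr w) (Inr (Suc n)))))
           (snd (snd (fst (Xp w, Yr w), snd (Xp w, Yr w) (Inl n), snd (Xp w, Yr w) (Inr (Suc n))))) i"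
        using KL unfolding Kset_Suc K_def[symmetric]
        by (auto simp: upd_def ext_def Xp_def Yr_def zf_def Xf_def)
    qed
  qed
  also have "\<dots> = (\<integral>\<^sup>+ p. Psi2 p \<partial>distr Pr (PK \<Otimes>\<^sub>M PL) (\<lambda>w. (Xp w, Yr w)))"
  proof (rule nn_integral_distr[symmetric])
    show "(\<lambda>w. (Xp w, Yr w)) \<in> Pr \<rightarrow>\<^sub>M PK \<Otimes>\<^sub>M PL" by (rule measurable_Pair[OF Xpm Yrm])
    show "Psi2 \<in> borel_measurable (distr Pr (PK \<Otimes>\<^sub>M PL) (\<lambda>w. (Xp w, Yr w)))"
      unfolding measurable_distr_eq1 by (rule Psi2m)
  qed
  also have "\<dots> = (\<integral>\<^sup>+ p. Psi2 p \<partial>(distr Pr PK Xp \<Otimes>\<^sub>M distr Pr PL Yr))"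
    unfolding joint ..
  also have "\<dots> = (\<integral>\<^sup>+ x. (\<integral>\<^sup>+ y. Psi2 (x, y) \<partial>distr Pr PL Yr) \<partial>distr Pr PK Xp)"
  proof (rule sigma_finite_measure.nn_integral_fst[OF sfL, symmetric])
    have "measurable (distr Pr PK Xp \<Otimes>\<^sub>M distr Pr PL Yr) (borel :: ennreal measure) = measurable (PK \<Otimes>\<^sub>M PL) borel"
      by (rule measurable_cong_sets[OF sets_pair_measure_cong[OF sets_distr sets_distr] refl])
    then show "Psi2 \<in> borel_measurable (distr Pr PK Xp \<Otimes>\<^sub>M distr Pr PL Yr)"
      using Psi2m by (simp only:)
  qed
  also have "\<dots> = (\<integral>\<^sup>+ x. (\<integral>\<^sup>+ a. (\<integral>\<^sup>+ s. Psi (x, (a, s)) \<partial>LS) \<partial>DA n) \<partial>distr Pr PK Xp)"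
  proof (rule nn_integral_cong)
    fix x assume x: "x \<in> space (distr Pr PK Xp)"
    have x': "x \<in> space PK" using x by simp
    have pm: "(\<lambda>q. Psi (x, q)) \<in> borel_measurable (borel \<Otimes>\<^sub>M borel)"
      by (rule measurable_compose[OF measurable_Pair1'[OF x'] Psim])
    have "(\<integral>\<^sup>+ y. Psi2 (x, y) \<partial>distr Pr PL Yr) = (\<integral>\<^sup>+ w. Psi2 (x, Yr w) \<partial>Pr)"
    proof (rule nn_integral_distr[OF Yrm])
      show "(\<lambda>y. Psi2 (x, y)) \<in> borel_measurable (distr Pr PL Yr)"
        unfolding measurable_distr_eq1 by (rule measurable_compose[OF measurable_Pair1'[OF x'] Psi2m])
    qed
    also have "\<dots> = (\<integral>\<^sup>+ w. Psi (x, Yp w) \<partial>Pr)"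
      by (rule nn_integral_cong) (simp add: Psi2_def Yr_def Yp_def Xf_def)
    also have "\<dots> = (\<integral>\<^sup>+ q. Psi (x, q) \<partial>distr Pr (borel \<Otimes>\<^sub>M borel) Yp)"
    proof (rule nn_integral_distr[symmetric, OF Ypm])
      show "(\<lambda>q. Psi (x, q)) \<in> borel_measurable (distr Pr (borel \<Otimes>\<^sub>M borel) Yp)"
        unfolding measurable_distr_eq1 by (rule pm)
    qed
    also have "\<dots> = (\<integral>\<^sup>+ q. Psi (x, q) \<partial>(DA n \<Otimes>\<^sub>M LS))"
      unfolding Yp_def AS_indep ..
    also have "\<dots> = (\<integral>\<^sup>+ a. (\<integral>\<^sup>+ s. Psi (x, (a, s)) \<partial>LS) \<partial>DA n)"
    proof (rule sigma_finite_measure.nn_integral_fst[OF sfS, symmetric])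
      show "(\<lambda>q. Psi (x, q)) \<in> borel_measurable (DA n \<Otimes>\<^sub>M LS)"
        unfolding eqs2 by (rule pm)
    qed
    finally show "(\<integral>\<^sup>+ y. Psi2 (x, y) \<partial>distr Pr PL Yr) = (\<integral>\<^sup>+ a. (\<integral>\<^sup>+ s. Psi (x, (a, s)) \<partial>LS) \<partial>DA n)" .
  qed
  also have "\<dots> = (\<integral>\<^sup>+ w. (\<integral>\<^sup>+ a. (\<integral>\<^sup>+ s. Psi (Xp w, (a, s)) \<partial>LS) \<partial>DA n) \<partial>Pr)"
  proof (rule nn_integral_distr[OF Xpm])
    have r: "(\<lambda>q::((nat + nat \<Rightarrow> real) \<times> real) \<times> real. (fst (fst q), (snd (fst q), snd q))) \<in> (PK \<Otimes>\<^sub>M DA n) \<Otimes>\<^sub>M LS \<rightarrow>\<^sub>M PK \<Otimes>\<^sub>M (borel \<Otimes>\<^sub>M borel)"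
      unfolding eqs3
      by (rule measurable_Pair[OF measurable_compose[OF measurable_fst measurable_fst] measurable_Pair[OF measurable_compose[OF measurable_fst measurable_snd] measurable_snd]])
    have m3: "(\<lambda>q. Psi (fst (fst q), (snd (fst q), snd q))) \<in> borel_measurable ((PK \<Otimes>\<^sub>M DA n) \<Otimes>\<^sub>M LS)"
      by (rule measurable_compose[OF r Psim])
    have m4: "(\<lambda>q. \<integral>\<^sup>+ s. Psi (fst q, (snd q, s)) \<partial>LS) \<in> borel_measurable (PK \<Otimes>\<^sub>M DA n)"
      using sigma_finite_measure.borel_measurable_nn_integral_fst[OF sfS m3] by (simp only: fst_conv snd_conv)
    have m5: "(\<lambda>x. \<integral>\<^sup>+ a. (\<integral>\<^sup>+ s. Psi (x, (a, s)) \<partial>LS) \<partial>DA n) \<in> borel_measurable PK"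
      using sigma_finite_measure.borel_measurable_nn_integral_fst[OF sfA m4] by (simp only: fst_conv snd_conv)
    show "(\<lambda>x. \<integral>\<^sup>+ a. (\<integral>\<^sup>+ s. Psi (x, (a, s)) \<partial>LS) \<partial>DA n) \<in> borel_measurable (distr Pr PK Xp)"
      unfolding measurable_distr_eq1 by (rule m5)
  qed
  also have "\<dots> = (\<integral>\<^sup>+ w. (\<integral>\<^sup>+ a. (\<integral>\<^sup>+ s. Phi (upd n (zf w) a s) \<partial>LS) \<partial>DA n) \<partial>Pr)"
  proof (intro nn_integral_cong)
    fix w a s
    show "Psi (Xp w, (a, s)) = Phi (upd n (zf w) a s)"
      unfolding Psi_def
    proof (rule dep, intro ballI)
      fix i assume "i \<in> Kset (Suc n)"
      then show "upd n (ext K (fst (Xp w, a, s))) (fst (snd (Xp w, a, s))) (snd (snd (Xp w, a, s))) i = upd n (zf w) a s i"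
        using KL unfolding Kset_Suc K_def[symmetric]
        by (auto simp: upd_def ext_def Xp_def zf_def)
    qed
  qed
  finally show ?thesis .
qed

end

lemma alive_dep:
  assumes "\<And>k. k < n \<Longrightarrow> A k = A' k" "\<And>k. k \<le> n \<Longrightarrow> S k = S' k"
  shows "alive b A S n = alive b A' S' n"
proof -
  have st: "lcfs_stack A S k = lcfs_stack A' S' k" if "k \<le> n" for k
    by (rule stack_dep) (use assms that in auto)
  show ?thesis unfolding alive_def in_busy_period_def
    using st assms(1) by (auto simp: less_imp_le)
qed

lemma Kset_agreeA: "\<forall>i\<in>Kset m. z i = z' i \<Longrightarrow> k < m \<Longrightarrow> z (Inl k) = z' (Inl k)"
  unfolding Kset_def by auto

lemma Kset_agreeS: "\<forall>i\<in>Kset m. z i = z' i \<Longrightarrow> k \<le> m \<Longrightarrow> z (Inr k) = z' (Inr k)"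
  unfolding Kset_def by auto

lemma stackz_agree: "\<forall>i\<in>Kset m. z i = z' i \<Longrightarrow> k \<le> m \<Longrightarrow> stackz k z = stackz k z'"
  unfolding stackz_def by (rule stack_dep) (auto simp: Kset_def)

lemma alivez_agree: "\<forall>i\<in>Kset m. z i = z' i \<Longrightarrow> k \<le> m \<Longrightarrow>
   alive b (\<lambda>k. z (Inl k)) (\<lambda>k. z (Inr k)) k = alive b (\<lambda>k. z' (Inl k)) (\<lambda>k. z' (Inr k)) k"
  by (rule alive_dep) (auto simp: Kset_def)

definition Zz :: "nat \<Rightarrow> (nat \<Rightarrow> real) \<Rightarrow> nat \<Rightarrow> (nat + nat \<Rightarrow> real) \<Rightarrow> ennreal" where
  "Zz b c n z = (if alive b (\<lambda>k. z (Inl k)) (\<lambda>k. z (Inr k)) n then ennreal (hh c (stackz n z)) else 0)"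

definition Sc :: "nat \<Rightarrow> nat \<Rightarrow> (nat + nat \<Rightarrow> real) \<Rightarrow> ennreal" where
  "Sc b n z = (if succ b (\<lambda>k. z (Inl k)) (\<lambda>k. z (Inr k)) n then 1 else 0)"

definition Phiz :: "nat \<Rightarrow> (nat \<Rightarrow> real) \<Rightarrow> nat \<Rightarrow> (nat + nat \<Rightarrow> real) \<Rightarrow> ennreal" where
  "Phiz b c n z = Zz b c (Suc n) z +
     (if alive b (\<lambda>k. z (Inl k)) (\<lambda>k. z (Inr k)) n \<and> lcfs_serve (stackz n z) (z (Inl n)) = [] then 1 else 0)"

lemma Zz_meas: "Zz b c n \<in> borel_measurable ZM"
proof -
  have f: "(\<lambda>z. ennreal (hh c (stackz n z))) \<in> borel_measurable ZM"
    by (rule measurable_compose[OF lmeas_hh[OF lmeas_stackz] measurable_ennreal])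
  show ?thesis unfolding Zz_def
    by (rule measurable_If[OF f borel_measurable_const predE[OF pred_alive]])
qed

lemma Sc_meas: "Sc b n \<in> borel_measurable ZM"
  unfolding Sc_def by (rule measurable_If[OF borel_measurable_const borel_measurable_const predE[OF pred_succ]])

lemma Phiz_meas: "Phiz b c n \<in> borel_measurable ZM"
proof -
  have p: "Measurable.pred ZM (\<lambda>z. alive b (\<lambda>k. z (Inl k)) (\<lambda>k. z (Inr k)) n \<and> lcfs_serve (stackz n z) (z (Inl n)) = [])"
    by (rule pred_intros_logic(3)[OF pred_alive lmeas_Nil_pred[OF lmeas_serve_z]])
  have g: "(\<lambda>z. if alive b (\<lambda>k. z (Inl k)) (\<lambda>k. z (Inr k)) n \<and> lcfs_serve (stackz n z) (z (Inl n)) = [] then 1 else (0::ennreal)) \<in> borel_measurable ZM"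
    by (rule measurable_If[OF borel_measurable_const borel_measurable_const predE[OF p]])
  show ?thesis unfolding Phiz_def
    by (rule borel_measurable_add[OF Zz_meas g])
qed

lemma Phiz_dep: "\<forall>i\<in>Kset (Suc n). z i = z' i \<Longrightarrow> Phiz b c n z = Phiz b c n z'"
proof -
  assume a: "\<forall>i\<in>Kset (Suc n). z i = z' i"
  have "stackz (Suc n) z = stackz (Suc n) z'" "stackz n z = stackz n z'"
    using stackz_agree[OF a] by auto
  moreover have "alive b (\<lambda>k. z (Inl k)) (\<lambda>k. z (Inr k)) (Suc n) = alive b (\<lambda>k. z' (Inl k)) (\<lambda>k. z' (Inr k)) (Suc n)"
     "alive b (\<lambda>k. z (Inl k)) (\<lambda>k. z (Inr k)) n = alive b (\<lambda>k. z' (Inl k)) (\<lambda>k. z' (Inr k)) n"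
    using alivez_agree[OF a] by auto
  moreover have "z (Inl n) = z' (Inl n)" using Kset_agreeA[OF a] by auto
  ultimately show ?thesis unfolding Phiz_def Zz_def by simp
qed

lemma step_identity: "Zz b c (Suc n) z + Sc b (Suc n) z = Sc b n z + Phiz b c n z"
proof -
  let ?A = "\<lambda>k. z (Inl k)" and ?S = "\<lambda>k. z (Inr k)"
  have st: "lcfs_stack ?A ?S n = stackz n z" by (simp add: stackz_def)
  show ?thesis
  proof (cases "succ b ?A ?S n")
    case True
    then have "\<not> alive b ?A ?S n" by (rule succ_not_alive)
    then have "\<not> alive b ?A ?S (Suc n)" by (auto simp: alive_Suc)
    then show ?thesis using True \<open>\<not> alive b ?A ?S n\<close>
      by (simp add: Sc_def Phiz_def Zz_def succ_Suc)
  next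
    case False
    then show ?thesis using st
      by (simp add: Sc_def Phiz_def Zz_def succ_Suc add.commute)
  qed
qed

lemma upd_stackz: "stackz n (upd n z a s) = stackz n z"
  by (rule stackz_agree[where m=n]) (auto simp: Kset_def upd_def)

lemma upd_alive: "alive b (\<lambda>k. upd n z a s (Inl k)) (\<lambda>k. upd n z a s (Inr k)) n = alive b (\<lambda>k. z (Inl k)) (\<lambda>k. z (Inr k)) n"
  by (rule alivez_agree[where m=n]) (auto simp: Kset_def upd_def)

lemma upd_stackz_Suc: "stackz (Suc n) (upd n z a s) = s # lcfs_serve (stackz n z) a"
  unfolding stackz_Suc upd_stackz by (simp add: upd_def)

lemma Phiz_upd:
  "Phiz b c n (upd n z a s) =
    (if alive b (\<lambda>k. z (Inl k)) (\<lambda>k. z (Inr k)) n then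
       (if lcfs_serve (stackz n z) a \<noteq> [] \<and> Suc (length (lcfs_serve (stackz n z) a)) \<le> b
        then ennreal (hh c (s # lcfs_serve (stackz n z) a)) else 0) +
       (if lcfs_serve (stackz n z) a = [] then 1 else 0)
     else 0)"
proof -
  have al: "alive b (\<lambda>k. upd n z a s (Inl k)) (\<lambda>k. upd n z a s (Inr k)) (Suc n) \<longleftrightarrow>
     alive b (\<lambda>k. z (Inl k)) (\<lambda>k. z (Inr k)) n \<and> lcfs_serve (stackz n z) a \<noteq> [] \<and> Suc (length (lcfs_serve (stackz n z) a)) \<le> b"
    using upd_alive[of b n z a s] upd_stackz_Suc[of n z a s] upd_stackz[of n z a s]
    by (simp add: alive_Suc stackz_def upd_def)
  have ua: "upd n z a s (Inl n) = a" by (simp add: upd_def)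
  show ?thesis
    unfolding Phiz_def Zz_def al upd_alive upd_stackz upd_stackz_Suc ua by auto
qed


context qsys begin

lemma exp_fun_meas: "(\<lambda>s::real. ennreal (exp (- C * s))) \<in> borel_measurable borel"
  by (rule measurable_compose[OF measurable_compose[OF borel_measurable_times[OF borel_measurable_const id_borel] borel_measurable_exp] measurable_ennreal])

lemma DA_density:
  assumes f: "f \<in> borel_measurable borel"
  shows "(\<integral>\<^sup>+ a. f a \<partial>DA n) = (\<integral>\<^sup>+ a. ennreal (exponential_density lam a) * f a \<partial>lborel)"
proof -
  have Al: "A n \<in> Pr \<rightarrow>\<^sub>M lborel" unfolding measurable_lborel1 by (rule A_meas)
  have "(\<integral>\<^sup>+ a. f a \<partial>DA n) = (\<integral>\<^sup>+ w. f (A n w) \<partial>Pr)"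
    by (rule nn_integral_distr[OF A_meas]) (unfold measurable_distr_eq1, rule f)
  also have "\<dots> = (\<integral>\<^sup>+ a. f a \<partial>distr Pr lborel (A n))"
    by (rule nn_integral_distr[symmetric, OF Al]) (unfold measurable_distr_eq1 measurable_lborel2, rule f)
  also have "distr Pr lborel (A n) = density lborel (\<lambda>x. ennreal (exponential_density lam x))"
    using arr[of n] unfolding distributed_def by blast
  also have "(\<integral>\<^sup>+ a. f a \<partial>density lborel (\<lambda>x. ennreal (exponential_density lam x))) = (\<integral>\<^sup>+ a. ennreal (exponential_density lam a) * f a \<partial>lborel)"
    by (rule nn_integral_density) (unfold measurable_lborel2, rule dens_meas, rule f)
  finally show ?thesis .
qed

lemma LS_exp: "(\<integral>\<^sup>+ s. ennreal (exp (- C * s)) \<partial>LS) = (\<integral>\<^sup>+ w. ennreal (exp (- C * S 0 w)) \<partial>Pr)"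
  by (rule nn_integral_distr[OF S_meas]) (unfold measurable_distr_eq1, rule exp_fun_meas)

lemma LS_prob: "prob_space LS"
  by (rule prob_space_distr[OF S_meas])

lemma LS_one: "(\<integral>\<^sup>+ s. 1 \<partial>LS) = 1"
  using prob_space.emeasure_space_1[OF LS_prob] by simp

lemma LS_univ: "emeasure LS UNIV = 1"
  using prob_space.emeasure_space_1[OF LS_prob] by simp

lemma inner_LS:
  assumes Q01: "\<And>m. 0 \<le> Q m" and Q0: "Q 0 = 0"
    and IH: "\<And>m. 1 \<le> m \<Longrightarrow> m < b \<Longrightarrow> ennreal (Q m) = (\<integral>\<^sup>+ w. ennreal (exp (- (lam * (1 - Q (m - 1))) * S 0 w)) \<partial>Pr)"
    and cdef: "c = (\<lambda>j. lam * (1 - Q (b - j)))"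
    and al: "alive b (\<lambda>k. z (Inl k)) (\<lambda>k. z (Inr k)) n"
  shows "(\<integral>\<^sup>+ s. Phiz b c n (upd n z a s) \<partial>LS) = W Q c b (lcfs_serve (stackz n z) a)"
proof -
  define ys where "ys = lcfs_serve (stackz n z) a"
  have lxs: "length (stackz n z) \<le> b" using al by (auto simp: alive_def stackz_def)
  have lys: "length ys \<le> b" unfolding ys_def using serve_len lxs order_trans by blast
  have e: "Phiz b c n (upd n z a s) = (if ys \<noteq> [] \<and> Suc (length ys) \<le> b then ennreal (hh c (s # ys)) else 0) + (if ys = [] then 1 else 0)" for s
    unfolding Phiz_upd ys_def[symmetric] using al by (simp only: if_True)
  show ?thesis
  proof (cases "ys = []")
    case True
    then show ?thesis unfolding e by (simp add: ys_def[symmetric] W_def LS_univ)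
  next
    case ne: False
    show ?thesis
    proof (cases "Suc (length ys) \<le> b")
      case True
      define m where "m = b - length ys"
      have ly: "0 < length ys" using ne by simp
      have m1: "1 \<le> m" "m < b" using True ly unfolding m_def by linarith+
      have bm: "b - Suc (length ys) = m - 1" unfolding m_def by linarith
      have cm: "c (Suc (length ys)) = lam * (1 - Q (m - 1))" unfolding cdef bm[symmetric] by (rule refl)
      have "(\<integral>\<^sup>+ s. Phiz b c n (upd n z a s) \<partial>LS) = (\<integral>\<^sup>+ s. ennreal (hh c ys) * ennreal (exp (- c (Suc (length ys)) * s)) \<partial>LS)"
      proof (rule nn_integral_cong)
        fix s
        have "hh c (s # ys) = exp (- c (Suc (length ys)) * s) * hh c ys" by simp
        then have "ennreal (hh c (s # ys)) = ennreal (hh c ys) * ennreal (exp (- c (Suc (length ys)) * s))"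
          using hh_pos[of c ys] by (simp add: ennreal_mult mult.commute)
        then show "Phiz b c n (upd n z a s) = ennreal (hh c ys) * ennreal (exp (- c (Suc (length ys)) * s))"
          unfolding e using ne True by simp
      qed
      also have "\<dots> = ennreal (hh c ys) * (\<integral>\<^sup>+ s. ennreal (exp (- c (Suc (length ys)) * s)) \<partial>LS)"
        by (rule nn_integral_cmult) (unfold measurable_distr_eq1, rule exp_fun_meas)
      also have "\<dots> = ennreal (hh c ys) * ennreal (Q m)"
        unfolding LS_exp cm IH[OF m1] ..
      also have "\<dots> = W Q c b ys"
        using ne hh_pos[of c ys] Q01[of m] unfolding W_def m_def by (simp add: ennreal_mult mult.commute)
      finally show ?thesis unfolding ys_def .
    next
      case False
      then have "length ys = b" using lys by simp
      then have "W Q c b ys = 0" using ne by (simp add: W_def Q0)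
      moreover have "Phiz b c n (upd n z a s) = 0" for s unfolding e using ne False by simp
      ultimately show ?thesis unfolding ys_def by simp
    qed
  qed
qed

lemma zf_stack: "stackz n (zf w) = lcfs_stack (\<lambda>k. A k w) (\<lambda>k. S k w) n"
  by (simp add: stackz_def)

lemma invariant:
  assumes b1: "1 \<le> b" and Q01: "\<And>m. 0 \<le> Q m" "\<And>m. Q m \<le> 1" and Q0: "Q 0 = 0"
    and IH: "\<And>m. 1 \<le> m \<Longrightarrow> m < b \<Longrightarrow> ennreal (Q m) = (\<integral>\<^sup>+ w. ennreal (exp (- (lam * (1 - Q (m - 1))) * S 0 w)) \<partial>Pr)"
    and cdef: "c = (\<lambda>j. lam * (1 - Q (b - j)))"
  shows "(\<integral>\<^sup>+ w. (Zz b c n (zf w) + Sc b n (zf w)) \<partial>Pr) = (\<integral>\<^sup>+ w. ennreal (hh c [S 0 w]) \<partial>Pr)"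
proof (induction n)
  case 0
  show ?case
  proof (rule nn_integral_cong)
    fix w
    have "alive b (\<lambda>k. zf w (Inl k)) (\<lambda>k. zf w (Inr k)) 0" using b1 by (simp add: alive_0)
    then show "Zz b c 0 (zf w) + Sc b 0 (zf w) = ennreal (hh c [S 0 w])"
      by (simp add: Zz_def Sc_def succ_0 stackz_def)
  qed
next
  case (Suc n)
  have mZ: "(\<lambda>w. Zz b c n (zf w)) \<in> borel_measurable Pr" by (rule measurable_compose[OF zf_meas Zz_meas])
  have mS: "(\<lambda>w. Sc b n (zf w)) \<in> borel_measurable Pr" by (rule measurable_compose[OF zf_meas Sc_meas])
  have mP: "(\<lambda>w. Phiz b c n (zf w)) \<in> borel_measurable Pr" by (rule measurable_compose[OF zf_meas Phiz_meas])
  have AEnn: "AE w in Pr. \<forall>k. 0 \<le> S k w"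
    unfolding AE_all_countable using S_nonneg by blast
  have "(\<integral>\<^sup>+ w. (Zz b c (Suc n) (zf w) + Sc b (Suc n) (zf w)) \<partial>Pr) = (\<integral>\<^sup>+ w. (Sc b n (zf w) + Phiz b c n (zf w)) \<partial>Pr)"
    by (simp only: step_identity)
  also have "\<dots> = (\<integral>\<^sup>+ w. Sc b n (zf w) \<partial>Pr) + (\<integral>\<^sup>+ w. Phiz b c n (zf w) \<partial>Pr)"
    by (rule nn_integral_add[OF mS mP])
  also have "(\<integral>\<^sup>+ w. Phiz b c n (zf w) \<partial>Pr) = (\<integral>\<^sup>+ w. (\<integral>\<^sup>+ a. (\<integral>\<^sup>+ s. Phiz b c n (upd n (zf w) a s) \<partial>LS) \<partial>DA n) \<partial>Pr)"
    by (rule one_step[OF Phiz_meas Phiz_dep])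
  also have "\<dots> = (\<integral>\<^sup>+ w. Zz b c n (zf w) \<partial>Pr)"
  proof (rule nn_integral_cong_AE)
    show "AE w in Pr. (\<integral>\<^sup>+ a. (\<integral>\<^sup>+ s. Phiz b c n (upd n (zf w) a s) \<partial>LS) \<partial>DA n) = Zz b c n (zf w)"
      using AEnn
    proof eventually_elim
      case (elim w)
      show ?case
      proof (cases "alive b (\<lambda>k. zf w (Inl k)) (\<lambda>k. zf w (Inr k)) n")
        case True
        have nn: "list_all (\<lambda>x. 0 \<le> x) (stackz n (zf w))"
          unfolding zf_stack by (rule stack_nonneg) (use elim in auto)
        have lxs: "length (stackz n (zf w)) \<le> b" using True by (auto simp: alive_def stackz_def)
        have "(\<integral>\<^sup>+ a. (\<integral>\<^sup>+ s. Phiz b c n (upd n (zf w) a s) \<partial>LS) \<partial>DA n) = (\<integral>\<^sup>+ a. W Q c b (lcfs_serve (stackz n (zf w)) a) \<partial>DA n)"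
          by (rule nn_integral_cong) (rule inner_LS[OF Q01(1) Q0 IH cdef True])
        also have "\<dots> = (\<integral>\<^sup>+ a. ennreal (exponential_density lam a) * W Q c b (lcfs_serve (stackz n (zf w)) a) \<partial>lborel)"
          by (rule DA_density[OF lmeas_W[OF lmeas_serve_const']])
        also have "\<dots> = ennreal (hh c (stackz n (zf w)))"
          by (rule analytic[OF lam_pos Q01 Q0 cdef nn lxs])
        finally show ?thesis using True by (simp add: Zz_def)
      next
        case False
        have "(\<integral>\<^sup>+ a. (\<integral>\<^sup>+ s. Phiz b c n (upd n (zf w) a s) \<partial>LS) \<partial>DA n) = 0"
          using False by (simp add: Phiz_upd)
        then show ?thesis using False by (simp add: Zz_def)
      qed
    qed
  qed
  finally have "(\<integral>\<^sup>+ w. (Zz b c (Suc n) (zf w) + Sc b (Suc n) (zf w)) \<partial>Pr) =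
      (\<integral>\<^sup>+ w. Sc b n (zf w) \<partial>Pr) + (\<integral>\<^sup>+ w. Zz b c n (zf w) \<partial>Pr)" .
  also have "\<dots> = (\<integral>\<^sup>+ w. (Zz b c n (zf w) + Sc b n (zf w)) \<partial>Pr)"
    by (subst nn_integral_add[OF mZ mS]) (simp add: add.commute)
  finally show ?case using Suc.IH by simp
qed

end

context qsys begin

lemma ev_pred: "Measurable.pred ZM P \<Longrightarrow> {w \<in> space Pr. P (zf w)} \<in> events"
  by (rule predE[OF measurable_compose[OF zf_meas]])

lemma alv_ev: "{w \<in> space Pr. alive b (\<lambda>k. A k w) (\<lambda>k. S k w) n} \<in> events"
  using ev_pred[OF pred_alive[of b n]] by (simp only: zf_Inl zf_Inr)

lemma indep_var_prob:
  assumes "indep_var Ma X Mb Y" "SA \<in> sets Ma" "SB \<in> sets Mb"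
  shows "prob ((X -` SA \<inter> space Pr) \<inter> (Y -` SB \<inter> space Pr)) = prob (X -` SA \<inter> space Pr) * prob (Y -` SB \<inter> space Pr)"
proof -
  have "prob (\<Inter>i\<in>UNIV. case_bool X Y i -` case_bool SA SB i \<inter> space Pr) = (\<Prod>i\<in>UNIV. prob (case_bool X Y i -` case_bool SA SB i \<inter> space Pr))"
    by (rule indep_varsD[OF assms(1)[unfolded indep_var_def]]) (auto split: bool.split simp: assms)
  then show ?thesis by (simp add: UNIV_bool Int_commute mult.commute)
qed

lemma probS: "prob {w \<in> space Pr. u < S j w} = prob {w \<in> space Pr. u < S 0 w}"
proof -
  have "prob {w \<in> space Pr. u < S j w} = measure (distr Pr borel (S j)) {u<..}"
    by (subst measure_distr[OF S_meas]) (auto intro!: arg_cong[where f=prob])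
  also have "\<dots> = measure (distr Pr borel (S 0)) {u<..}" unfolding S_ident[of j] ..
  also have "\<dots> = prob {w \<in> space Pr. u < S 0 w}"
    by (subst measure_distr[OF S_meas]) (auto intro!: arg_cong[where f=prob])
  finally show ?thesis .
qed

lemma probA: "0 \<le> u \<Longrightarrow> prob {w \<in> space Pr. A j w \<le> u} = 1 - exp (- u * lam)"
  using prob_space.exponential_distributedD_le[OF prob_space_axioms arr[of j] _ lam_pos] by simp

lemma geo_step:
  assumes u: "0 < u" and b1: "1 \<le> b" and mnS: "mn \<le> prob {w \<in> space Pr. u < S 0 w}"
    and mnA: "mn \<le> 1 - exp (- u * lam)" and mn0: "0 \<le> mn"
  shows "prob {w \<in> space Pr. alive b (\<lambda>k. A k w) (\<lambda>k. S k w) (n + Suc b)} \<le>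
     (1 - mn ^ (2 * b)) * prob {w \<in> space Pr. alive b (\<lambda>k. A k w) (\<lambda>k. S k w) n}"
proof -
  define K where "K = Kset n"
  define J where "J = {Suc n..n + b}"
  define L where "L = Inl ` J \<union> Inr ` J"
  define alv where "alv = (\<lambda>m. {w \<in> space Pr. alive b (\<lambda>k. A k w) (\<lambda>k. S k w) m})"
  define Xp where "Xp = (\<lambda>w. restrict (\<lambda>i. Xf i w) K)"
  define XL where "XL = (\<lambda>w. restrict (\<lambda>i. Xf i w) L)"
  have KL: "K \<inter> L = {}" unfolding K_def L_def J_def Kset_def by auto
  have ind: "indep_var (PiM K (\<lambda>_. borel)) Xp (PiM L (\<lambda>_. borel)) XL"
    unfolding Xp_def XL_def by (rule indep_var_restrict[OF indep' KL]) auto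
  define SA where "SA = {x \<in> space (PiM K (\<lambda>_. borel)). alive b (\<lambda>k. ext K x (Inl k)) (\<lambda>k. ext K x (Inr k)) n}"
  have SA: "SA \<in> sets (PiM K (\<lambda>_. borel))"
    unfolding SA_def by (rule predE[OF measurable_compose[OF ext_meas pred_alive]])
  define SB where "SB = {y \<in> space (PiM L (\<lambda>_. borel)). \<forall>j\<in>J. u < y (Inr j) \<and> y (Inl j) \<le> u}"
  have SB: "SB \<in> sets (PiM L (\<lambda>_::nat + nat. borel :: real measure))"
  proof -
    have "Measurable.pred (PiM L (\<lambda>_::nat + nat. borel :: real measure)) (\<lambda>y. \<forall>j\<in>J. u < y (Inr j) \<and> y (Inl j) \<le> u)"
    proof (rule pred_intros_finite(3))
      show "finite J" unfolding J_def by simp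
      fix j assume j: "j \<in> J"
      have r: "Inr j \<in> L" "Inl j \<in> L" using j unfolding L_def by auto
      have p1: "Measurable.pred (PiM L (\<lambda>_::nat + nat. borel :: real measure)) (\<lambda>y. u < y (Inr j))"
        unfolding pred_def by (rule borel_measurable_less[OF borel_measurable_const measurable_component_singleton[OF r(1)]])
      have p2: "Measurable.pred (PiM L (\<lambda>_::nat + nat. borel :: real measure)) (\<lambda>y. y (Inl j) \<le> u)"
        unfolding pred_def by (rule borel_measurable_le[OF measurable_component_singleton[OF r(2)] borel_measurable_const])
      show "Measurable.pred (PiM L (\<lambda>_::nat + nat. borel :: real measure)) (\<lambda>y. u < y (Inr j) \<and> y (Inl j) \<le> u)"
        by (rule pred_intros_logic(3)[OF p1 p2])
    qed
    then show ?thesis unfolding SB_def pred_def .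
  qed
  have alvn: "alv n = Xp -` SA \<inter> space Pr"
  proof (intro set_eqI iffI)
    fix w assume w: "w \<in> alv n"
    have ag: "\<forall>i\<in>Kset n. ext K (Xp w) i = zf w i" unfolding K_def ext_def Xp_def zf_def by simp
    have "alive b (\<lambda>k. ext K (Xp w) (Inl k)) (\<lambda>k. ext K (Xp w) (Inr k)) n = alive b (\<lambda>k. zf w (Inl k)) (\<lambda>k. zf w (Inr k)) n"
      by (rule alivez_agree[OF ag order_refl])
    then show "w \<in> Xp -` SA \<inter> space Pr" using w unfolding alv_def SA_def Xp_def
      by (auto simp: space_PiM)
  next
    fix w assume w: "w \<in> Xp -` SA \<inter> space Pr"
    have ag: "\<forall>i\<in>Kset n. ext K (Xp w) i = zf w i" unfolding K_def ext_def Xp_def zf_def by simp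
    have "alive b (\<lambda>k. ext K (Xp w) (Inl k)) (\<lambda>k. ext K (Xp w) (Inr k)) n = alive b (\<lambda>k. zf w (Inl k)) (\<lambda>k. zf w (Inr k)) n"
      by (rule alivez_agree[OF ag order_refl])
    then show "w \<in> alv n" using w unfolding alv_def SA_def by auto
  qed
  define En where "En = {w \<in> space Pr. \<forall>j\<in>J. u < S j w \<and> A j w \<le> u}"
  have EnXL: "En = XL -` SB \<inter> space Pr"
    unfolding En_def SB_def XL_def L_def by (auto simp: space_PiM Xf_def)
  have indep_prob: "prob (alv n \<inter> En) = prob (alv n) * prob En"
    unfolding alvn EnXL by (rule indep_var_prob[OF ind SA SB])
  define B where "B = (\<lambda>i::nat + nat. case i of Inl _ \<Rightarrow> {..u} | Inr _ \<Rightarrow> {u<..})"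
  have Jne: "J \<noteq> {}" unfolding J_def using b1 by auto
  have finL: "finite L" unfolding L_def J_def by simp
  have Lne: "L \<noteq> {}" unfolding L_def using Jne by simp
  have EnInt: "En = (\<Inter>i\<in>L. Xf i -` B i \<inter> space Pr)"
  proof (intro set_eqI iffI)
    fix w assume "w \<in> En" then show "w \<in> (\<Inter>i\<in>L. Xf i -` B i \<inter> space Pr)"
      unfolding En_def L_def B_def using Jne by (auto simp: Xf_def)
  next
    fix w assume w: "w \<in> (\<Inter>i\<in>L. Xf i -` B i \<inter> space Pr)"
    have "\<forall>j\<in>J. u < S j w \<and> A j w \<le> u"
    proof
      fix j assume j: "j \<in> J"
      have "w \<in> Xf (Inr j) -` B (Inr j) \<inter> space Pr" by (rule INT_D[OF w]) (use j in \<open>simp add: L_def\<close>)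
      moreover have "w \<in> Xf (Inl j) -` B (Inl j) \<inter> space Pr" by (rule INT_D[OF w]) (use j in \<open>simp add: L_def\<close>)
      ultimately have "w \<in> Xf (Inr j) -` B (Inr j)" "w \<in> Xf (Inl j) -` B (Inl j)" by auto
      then show "u < S j w \<and> A j w \<le> u" by (simp add: Xf_def B_def)
    qed
    moreover have "w \<in> space Pr" using w Lne by auto
    ultimately show "w \<in> En" unfolding En_def by simp
  qed
  have "prob En = (\<Prod>i\<in>L. prob (Xf i -` B i \<inter> space Pr))"
    unfolding EnInt by (rule indep_varsD[OF indep' Lne finL]) (auto simp: B_def split: sum.split)
  also have "\<dots> \<ge> (\<Prod>i\<in>L. mn)"
  proof (rule prod_mono)
    fix i assume "i \<in> L"
    show "0 \<le> mn \<and> mn \<le> prob (Xf i -` B i \<inter> space Pr)"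
    proof (cases i)
      case (Inl j)
      have "Xf i -` B i \<inter> space Pr = {w \<in> space Pr. A j w \<le> u}" using Inl by (auto simp: Xf_def B_def)
      then show ?thesis using mnA mn0 probA[of u j] u by simp
    next
      case (Inr j)
      have "Xf i -` B i \<inter> space Pr = {w \<in> space Pr. u < S j w}" using Inr by (auto simp: Xf_def B_def)
      then show ?thesis using mnS mn0 probS[of u j] by simp
    qed
  qed
  finally have pEn: "mn ^ card L \<le> prob En" by simp
  have cardL: "card L = 2 * b"
  proof -
    have "card L = card (Inl ` J :: (nat + nat) set) + card (Inr ` J :: (nat + nat) set)"
      unfolding L_def by (rule card_Un_disjoint) (auto simp: J_def)
    also have "\<dots> = card J + card J" by (simp add: card_image)
    also have "card J = b" unfolding J_def by simp
    finally show ?thesis by simp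
  qed
  have sub: "alv (n + Suc b) \<subseteq> alv n - En"
  proof
    fix w assume w: "w \<in> alv (n + Suc b)"
    then have a1: "alive b (\<lambda>k. A k w) (\<lambda>k. S k w) (n + Suc b)" "w \<in> space Pr" unfolding alv_def by auto
    have "alive b (\<lambda>k. A k w) (\<lambda>k. S k w) n" by (rule alive_mono[OF a1(1)]) simp
    moreover have "w \<notin> En"
    proof
      assume "w \<in> En"
      then have "\<And>j. 1 \<le> j \<Longrightarrow> j \<le> b \<Longrightarrow> u < S (n + j) w \<and> A (n + j) w \<le> u"
        unfolding En_def J_def by auto
      then have "\<not> alive b (\<lambda>k. A k w) (\<lambda>k. S k w) (n + Suc b)"
        by (rule grow_not_alive)
      then show False using a1 by simp
    qed
    ultimately show "w \<in> alv n - En" using a1 unfolding alv_def by auto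
  qed
  have evn: "alv n \<in> events" unfolding alv_def by (rule alv_ev)
  have evE: "En \<in> events" unfolding EnXL
    by (rule measurable_sets[OF _ SB]) (use ind in \<open>simp add: indep_var_distribution_eq\<close>)
  have "prob (alv (n + Suc b)) \<le> prob (alv n - En)"
    by (rule finite_measure_mono[OF sub]) (use evn evE in auto)
  also have "\<dots> = prob (alv n) - prob (alv n \<inter> En)"
    by (rule finite_measure_Diff'[OF evn evE])
  also have "\<dots> = prob (alv n) - prob (alv n) * prob En" unfolding indep_prob ..
  also have "\<dots> \<le> prob (alv n) - prob (alv n) * mn ^ (2 * b)"
    using pEn cardL by (simp add: mult_left_mono)
  also have "\<dots> = (1 - mn ^ (2 * b)) * prob (alv n)" by (simp add: algebra_simps)
  finally show ?thesis unfolding alv_def .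
qed

end

context qsys begin

lemma AL_ev: "{w \<in> space Pr. \<forall>n. alive b (\<lambda>k. A k w) (\<lambda>k. S k w) n} \<in> events"
  using ev_pred[OF pred_intros_countable(1)[OF pred_alive[of b]]] by (simp only: zf_Inl zf_Inr)

lemma AL_null:
  assumes b1: "1 \<le> b"
  shows "prob {w \<in> space Pr. \<forall>n. alive b (\<lambda>k. A k w) (\<lambda>k. S k w) n} = 0"
proof (cases "\<exists>u>0. 0 < prob {w \<in> space Pr. u < S 0 w}")
  case True
  then obtain u where u: "0 < u" "0 < prob {w \<in> space Pr. u < S 0 w}" by blast
  define mn where "mn = min (prob {w \<in> space Pr. u < S 0 w}) (1 - exp (- u * lam))"
  have ex: "exp (- u * lam) < 1" using u lam_pos by simp
  have mn0: "0 < mn" unfolding mn_def using u ex by simp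
  have mn1: "mn \<le> 1" unfolding mn_def using prob_le_1 by (simp add: min.coboundedI1)
  define d where "d = mn ^ (2 * b)"
  have d0: "0 < d" unfolding d_def using mn0 by simp
  have d1: "d \<le> 1" unfolding d_def using mn0 mn1 by (simp add: power_le_one)
  define alv where "alv = (\<lambda>m. {w \<in> space Pr. alive b (\<lambda>k. A k w) (\<lambda>k. S k w) m})"
  have step: "prob (alv (n + Suc b)) \<le> (1 - d) * prob (alv n)" for n
    unfolding alv_def d_def by (rule geo_step[OF u(1) b1]) (use mn0 in \<open>auto simp: mn_def\<close>)
  have it: "prob (alv (m * Suc b)) \<le> (1 - d) ^ m" for m
  proof (induction m)
    case 0 then show ?case by simp
  next
    case (Suc m)
    have "Suc m * Suc b = m * Suc b + Suc b" by simp
    then have "prob (alv (Suc m * Suc b)) = prob (alv (m * Suc b + Suc b))" by (simp only:)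
    also have "\<dots> \<le> (1 - d) * prob (alv (m * Suc b))" by (rule step)
    also have "\<dots> \<le> (1 - d) * (1 - d) ^ m" by (rule mult_left_mono[OF Suc.IH]) (use d1 in simp)
    finally show ?case by simp
  qed
  define AL where "AL = {w \<in> space Pr. \<forall>n. alive b (\<lambda>k. A k w) (\<lambda>k. S k w) n}"
  have le: "prob AL \<le> (1 - d) ^ m" for m
  proof -
    have "prob AL \<le> prob (alv (m * Suc b))"
      by (rule finite_measure_mono) (auto simp: AL_def alv_def intro: alv_ev)
    then show ?thesis using it[of m] by simp
  qed
  have lim: "(\<lambda>m. (1 - d) ^ m) \<longlonglongrightarrow> 0"
    by (rule LIMSEQ_power_zero) (use d0 d1 in simp)
  have "prob AL \<le> 0"
    by (rule LIMSEQ_le_const[OF lim]) (use le in blast)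
  then show ?thesis unfolding AL_def using measure_nonneg[of Pr] by (simp add: order_antisym)
next
  case False
  then have z: "prob {w \<in> space Pr. u < S 0 w} = 0" if "0 < u" for u
    using that measure_nonneg[of Pr] by (meson not_le order_antisym)
  have evS: "{w \<in> space Pr. u < S 0 w} \<in> events" for u
    by (rule borel_measurable_less[OF borel_measurable_const S_meas])
  have N1: "{w \<in> space Pr. 0 < S 0 w} \<in> null_sets Pr"
  proof -
    have "{w \<in> space Pr. 0 < S 0 w} = (\<Union>k. {w \<in> space Pr. 1 / real (Suc k) < S 0 w})"
    proof (intro set_eqI iffI)
      fix w assume w: "w \<in> {w \<in> space Pr. 0 < S 0 w}"
      then have "0 < S 0 w" by simp
      from reals_Archimedean[OF this] obtain k where "inverse (real (Suc k)) < S 0 w" by blast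
      then have "1 / real (Suc k) < S 0 w" by (simp add: inverse_eq_divide)
      then show "w \<in> (\<Union>k. {w \<in> space Pr. 1 / real (Suc k) < S 0 w})" using w by auto
    next
      fix w assume "w \<in> (\<Union>k. {w \<in> space Pr. 1 / real (Suc k) < S 0 w})"
      then obtain k where "w \<in> space Pr" "1 / real (Suc k) < S 0 w" by auto
      moreover have "0 < 1 / real (Suc k)" by simp
      ultimately have "w \<in> space Pr" "0 < S 0 w" by linarith+
      then show "w \<in> {w \<in> space Pr. 0 < S 0 w}" by simp
    qed
    also have "\<dots> \<in> null_sets Pr"
    proof (rule null_sets_UN)
      fix k
      have "prob {w \<in> space Pr. 1 / real (Suc k) < S 0 w} = 0" by (rule z) simp
      then have "emeasure Pr {w \<in> space Pr. 1 / real (Suc k) < S 0 w} = 0"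
        by (simp only: emeasure_eq_measure ennreal_0)
      then show "{w \<in> space Pr. 1 / real (Suc k) < S 0 w} \<in> null_sets Pr"
        by (rule null_setsI[OF _ evS])
    qed
    finally show ?thesis .
  qed
  have evA: "{w \<in> space Pr. A 0 w \<le> 0} \<in> events"
    by (rule borel_measurable_le[OF A_meas borel_measurable_const])
  have pA: "prob {w \<in> space Pr. A 0 w \<le> 0} = 0" using probA[of 0 0] by simp
  have sub: "{w \<in> space Pr. \<forall>n. alive b (\<lambda>k. A k w) (\<lambda>k. S k w) n} \<subseteq> {w \<in> space Pr. A 0 w \<le> 0} \<union> {w \<in> space Pr. 0 < S 0 w}"
  proof
    fix w assume w: "w \<in> {w \<in> space Pr. \<forall>n. alive b (\<lambda>k. A k w) (\<lambda>k. S k w) n}"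
    then have "alive b (\<lambda>k. A k w) (\<lambda>k. S k w) 1" by auto
    then have "lcfs_serve [S 0 w] (A 0 w) \<noteq> []" by (simp add: alive_def inbp_Suc)
    then have "\<not> S 0 w \<le> A 0 w" by (auto split: if_splits)
    then show "w \<in> {w \<in> space Pr. A 0 w \<le> 0} \<union> {w \<in> space Pr. 0 < S 0 w}" using w by auto
  qed
  have evN: "{w \<in> space Pr. 0 < S 0 w} \<in> events" using N1 by (rule null_setsD2)
  have pN: "prob {w \<in> space Pr. 0 < S 0 w} = 0"
    using null_setsD1[OF N1] unfolding measure_def by simp
  have evU: "{w \<in> space Pr. A 0 w \<le> 0} \<union> {w \<in> space Pr. 0 < S 0 w} \<in> events"
    by (rule sets.Un[OF evA evN])
  have "prob {w \<in> space Pr. \<forall>n. alive b (\<lambda>k. A k w) (\<lambda>k. S k w) n} \<le> prob ({w \<in> space Pr. A 0 w \<le> 0} \<union> {w \<in> space Pr. 0 < S 0 w})"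
    by (rule finite_measure_mono[OF sub evU])
  also have "\<dots> \<le> prob {w \<in> space Pr. A 0 w \<le> 0} + prob {w \<in> space Pr. 0 < S 0 w}"
    by (rule measure_Un_le[OF evA evN])
  also have "\<dots> = 0" unfolding pA pN by simp
  finally show ?thesis using measure_nonneg[of Pr] by (simp add: order_antisym)
qed

end

context qsys begin

lemma sc_ev: "{w \<in> space Pr. succ b (\<lambda>k. A k w) (\<lambda>k. S k w) n} \<in> events"
  using ev_pred[OF pred_succ[of b n]] by (simp only: zf_Inl zf_Inr)

lemma bm_ev: "{w \<in> space Pr. busy_max (\<lambda>k. A k w) (\<lambda>k. S k w) \<le> enat b} \<in> events"
  using ev_pred[OF pred_bm[of b]] by (simp only: zf_Inl zf_Inr)

lemma main_b:
  assumes b1: "1 \<le> b" and Q01: "\<And>m. 0 \<le> Q m" "\<And>m. Q m \<le> 1" and Q0: "Q 0 = 0"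
    and IH: "\<And>m. 1 \<le> m \<Longrightarrow> m < b \<Longrightarrow> ennreal (Q m) = (\<integral>\<^sup>+ w. ennreal (exp (- (lam * (1 - Q (m - 1))) * S 0 w)) \<partial>Pr)"
    and cdef: "c = (\<lambda>j. lam * (1 - Q (b - j)))"
  shows "emeasure Pr {w \<in> space Pr. busy_max (\<lambda>k. A k w) (\<lambda>k. S k w) \<le> enat b} = (\<integral>\<^sup>+ w. ennreal (hh c [S 0 w]) \<partial>Pr)"
proof -
  define C where "C = (\<integral>\<^sup>+ w. ennreal (hh c [S 0 w]) \<partial>Pr)"
  define sc where "sc = (\<lambda>n. {w \<in> space Pr. succ b (\<lambda>k. A k w) (\<lambda>k. S k w) n})"
  define alv where "alv = (\<lambda>n. {w \<in> space Pr. alive b (\<lambda>k. A k w) (\<lambda>k. S k w) n})"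
  define SC where "SC = (\<Union>n. sc n)"
  define AL where "AL = {w \<in> space Pr. \<forall>n. alive b (\<lambda>k. A k w) (\<lambda>k. S k w) n}"
  define BM where "BM = {w \<in> space Pr. busy_max (\<lambda>k. A k w) (\<lambda>k. S k w) \<le> enat b}"
  have evsc: "sc n \<in> events" for n unfolding sc_def by (rule sc_ev)
  have evalv: "alv n \<in> events" for n unfolding alv_def by (rule alv_ev)
  have evSC: "SC \<in> events" unfolding SC_def using evsc by blast
  have evAL: "AL \<in> events" unfolding AL_def by (rule AL_ev)
  have evBM: "BM \<in> events" unfolding BM_def by (rule bm_ev)
  have inv: "(\<integral>\<^sup>+ w. (Zz b c n (zf w) + Sc b n (zf w)) \<partial>Pr) = C" for n
    unfolding C_def by (rule invariant[OF b1 Q01 Q0 IH cdef])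
  have mZ: "(\<lambda>w. Zz b c n (zf w)) \<in> borel_measurable Pr" for n by (rule measurable_compose[OF zf_meas Zz_meas])
  have mS: "(\<lambda>w. Sc b n (zf w)) \<in> borel_measurable Pr" for n by (rule measurable_compose[OF zf_meas Sc_meas])
  have Sc_eq: "(\<integral>\<^sup>+ w. Sc b n (zf w) \<partial>Pr) = emeasure Pr (sc n)" for n
  proof -
    have "(\<integral>\<^sup>+ w. Sc b n (zf w) \<partial>Pr) = (\<integral>\<^sup>+ w. indicator (sc n) w \<partial>Pr)"
      by (rule nn_integral_cong) (simp add: Sc_def sc_def indicator_def)
    also have "\<dots> = emeasure Pr (sc n)" by (rule nn_integral_indicator[OF evsc])
    finally show ?thesis .
  qed
  have AEnn: "AE w in Pr. \<forall>k. 0 \<le> S k w"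
    unfolding AE_all_countable using S_nonneg by blast
  have c0: "0 \<le> c j" for j unfolding cdef using lam_pos Q01 by simp
  have Zz_le: "(\<integral>\<^sup>+ w. Zz b c n (zf w) \<partial>Pr) \<le> emeasure Pr (alv n)" for n
  proof -
    have "(\<integral>\<^sup>+ w. Zz b c n (zf w) \<partial>Pr) \<le> (\<integral>\<^sup>+ w. indicator (alv n) w \<partial>Pr)"
    proof (rule nn_integral_mono_AE)
      show "AE w in Pr. Zz b c n (zf w) \<le> indicator (alv n) w"
        using AEnn AE_space
      proof eventually_elim
        case (elim w)
        have nn: "list_all (\<lambda>x. 0 \<le> x) (stackz n (zf w))"
          unfolding zf_stack by (rule stack_nonneg) (use elim in auto)
        have "hh c (stackz n (zf w)) \<le> 1" by (rule hh_le1[OF c0 nn])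
        then show ?case using elim(2)
          by (auto simp: Zz_def alv_def indicator_def)
      qed
    qed
    also have "\<dots> = emeasure Pr (alv n)" by (rule nn_integral_indicator[OF evalv])
    finally show ?thesis .
  qed
  have scC: "emeasure Pr (sc n) \<le> C" for n
  proof -
    have "emeasure Pr (sc n) = (\<integral>\<^sup>+ w. Sc b n (zf w) \<partial>Pr)" by (rule Sc_eq[symmetric])
    also have "\<dots> \<le> (\<integral>\<^sup>+ w. (Zz b c n (zf w) + Sc b n (zf w)) \<partial>Pr)"
      by (rule nn_integral_mono) (rule add_increasing, simp_all)
    finally show ?thesis unfolding inv .
  qed
  have Cle: "C \<le> emeasure Pr (sc n) + emeasure Pr (alv n)" for n
  proof -
    have "C = (\<integral>\<^sup>+ w. Zz b c n (zf w) \<partial>Pr) + (\<integral>\<^sup>+ w. Sc b n (zf w) \<partial>Pr)"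
      unfolding inv[of n, symmetric] by (rule nn_integral_add[OF mZ mS])
    also have "\<dots> \<le> emeasure Pr (alv n) + emeasure Pr (sc n)"
      unfolding Sc_eq by (rule add_right_mono[OF Zz_le])
    finally show ?thesis by (simp add: add.commute)
  qed
  have incsc: "incseq sc"
    by (rule incseq_SucI) (auto simp: sc_def succ_Suc)
  have decalv: "decseq alv"
    by (rule decseq_SucI) (auto simp: alv_def alive_Suc)
  have "(SUP n. emeasure Pr (sc n)) = emeasure Pr SC"
    unfolding SC_def by (rule SUP_emeasure_incseq[OF _ incsc]) (use evsc in blast)
  then have SC_le: "emeasure Pr SC \<le> C" using scC by (metis SUP_least)
  have ALint: "(\<Inter>n. alv n) = AL" unfolding alv_def AL_def by auto
  have AL0: "emeasure Pr AL = 0"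
    using AL_null[OF b1] unfolding AL_def by (simp add: emeasure_eq_measure)
  have lim: "(\<lambda>n. emeasure Pr (alv n)) \<longlonglongrightarrow> 0"
  proof -
    have "(\<lambda>n. emeasure Pr (alv n)) \<longlonglongrightarrow> emeasure Pr (\<Inter>n. alv n)"
      by (rule Lim_emeasure_decseq[OF _ decalv]) (use evalv in \<open>auto simp: emeasure_eq_measure\<close>)
    then show ?thesis unfolding ALint AL0 .
  qed
  have "(\<lambda>n. emeasure Pr SC + emeasure Pr (alv n)) \<longlonglongrightarrow> emeasure Pr SC + 0"
    by (rule tendsto_add[OF tendsto_const lim])
  then have "C \<le> emeasure Pr SC + 0"
  proof (rule LIMSEQ_le_const)
    have "C \<le> emeasure Pr SC + emeasure Pr (alv n)" for n
    proof -
      have "emeasure Pr (sc n) \<le> emeasure Pr SC"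
        by (rule emeasure_mono) (use evSC in \<open>auto simp: SC_def\<close>)
      then show ?thesis using Cle[of n] by (meson add_right_mono order_trans)
    qed
    then show "\<exists>N. \<forall>n\<ge>N. C \<le> emeasure Pr SC + emeasure Pr (alv n)" by blast
  qed
  then have SCeq: "emeasure Pr SC = C" using SC_le by simp
  have BMeq: "BM = SC \<union> AL"
  proof -
    have "busy_max (\<lambda>k. A k w) (\<lambda>k. S k w) \<le> enat b \<longleftrightarrow>
       (\<exists>n. succ b (\<lambda>k. A k w) (\<lambda>k. S k w) n) \<or> (\<forall>n. alive b (\<lambda>k. A k w) (\<lambda>k. S k w) n)" for w
      unfolding busy_max_le bm_char ..
    then show ?thesis unfolding BM_def SC_def AL_def sc_def by blast
  qed
  have "emeasure Pr BM \<le> emeasure Pr SC + emeasure Pr AL"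
    unfolding BMeq by (rule emeasure_subadditive[OF evSC evAL])
  moreover have "emeasure Pr SC \<le> emeasure Pr BM"
    by (rule emeasure_mono) (use evBM in \<open>auto simp: BMeq\<close>)
  ultimately have "emeasure Pr BM = emeasure Pr SC" using AL0 by (simp add: antisym)
  then show ?thesis unfolding BM_def SCeq C_def .
qed

end

theorem corollary2:
  fixes Pr :: "'w measure" and lam :: real
    and A :: "nat \<Rightarrow> 'w \<Rightarrow> real" and S :: "nat \<Rightarrow> 'w \<Rightarrow> real"
    and P :: "nat \<Rightarrow> real"
  assumes "prob_space Pr"
    and lam_pos: "0 < lam"
    and indep: "prob_space.indep_vars Pr (\<lambda>_. borel)
                  (\<lambda>i. case i of Inl n \<Rightarrow> A n | Inr n \<Rightarrow> S n) UNIV"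
    and arr: "\<And>n. distributed Pr lborel (A n) (exponential_density lam)"
    and S_meas: "\<And>n. S n \<in> borel_measurable Pr"
    and S_ident: "\<And>n. distr Pr borel (S n) = distr Pr borel (S 0)"
    and S_nonneg: "\<And>n. AE w in Pr. 0 \<le> S n w"
    and S_int: "integrable Pr (S 0)"
    and load: "lam * prob_space.expectation Pr (S 0) < 1"
    and P_def: "\<And>b. P b = measure Pr {w \<in> space Pr. busy_max (\<lambda>n. A n w) (\<lambda>n. S n w) \<le> enat b}"
  shows "\<forall>b::nat. b \<ge> 1 \<longrightarrow>
           P b = prob_space.expectation Pr (\<lambda>w. exp (- lam * (1 - P (b - 1)) * S 0 w))"
proof -
  interpret qsys Pr lam A S
    by (rule qsys.intro[OF assms(1)], rule qsys_axioms.intro) (use lam_pos indep arr S_ident S_nonneg in auto)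
  have P01: "0 \<le> P m" "P m \<le> 1" for m unfolding P_def by (simp_all add: prob_le_1)
  have P0: "P 0 = 0"
  proof -
    have eq0: "{w \<in> space Pr. busy_max (\<lambda>n. A n w) (\<lambda>n. S n w) \<le> enat 0} = {}"
    proof (rule equals0I)
      fix w assume "w \<in> {w \<in> space Pr. busy_max (\<lambda>n. A n w) (\<lambda>n. S n w) \<le> enat 0}"
      then have "\<forall>n. in_busy_period (\<lambda>n. A n w) (\<lambda>n. S n w) n \<longrightarrow> length (lcfs_stack (\<lambda>n. A n w) (\<lambda>n. S n w) n) \<le> 0"
        unfolding busy_max_le by blast
      then have "length (lcfs_stack (\<lambda>n. A n w) (\<lambda>n. S n w) 0) \<le> 0"
        using inbp_0[of "\<lambda>n. A n w" "\<lambda>n. S n w"] by blast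
      then show False by simp
    qed
    show ?thesis unfolding P_def eq0 by simp
  qed
  have main: "ennreal (P b) = (\<integral>\<^sup>+ w. ennreal (exp (- (lam * (1 - P (b - 1))) * S 0 w)) \<partial>Pr)" if "1 \<le> b" for b
    using that
  proof (induction b rule: less_induct)
    case (less b)
    define c where "c = (\<lambda>j. lam * (1 - P (b - j)))"
    have "emeasure Pr {w \<in> space Pr. busy_max (\<lambda>k. A k w) (\<lambda>k. S k w) \<le> enat b} = (\<integral>\<^sup>+ w. ennreal (hh c [S 0 w]) \<partial>Pr)"
      by (rule main_b[OF less.prems P01(1) P01(2) P0 less.IH c_def])
    moreover have "ennreal (P b) = emeasure Pr {w \<in> space Pr. busy_max (\<lambda>k. A k w) (\<lambda>k. S k w) \<le> enat b}"
      unfolding P_def by (simp add: emeasure_eq_measure)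
    moreover have "(\<lambda>w. ennreal (hh c [S 0 w])) = (\<lambda>w. ennreal (exp (- (lam * (1 - P (b - 1))) * S 0 w)))"
      by (simp add: c_def fun_eq_iff)
    ultimately show ?case by metis
  qed
  show ?thesis
  proof (intro allI impI)
    fix b :: nat assume b: "1 \<le> b"
    have fm: "(\<lambda>w. exp (- lam * (1 - P (b - 1)) * S 0 w)) \<in> borel_measurable Pr"
      by (rule measurable_compose[OF borel_measurable_times[OF borel_measurable_const S_meas] borel_measurable_exp])
    have "expectation (\<lambda>w. exp (- lam * (1 - P (b - 1)) * S 0 w)) = enn2real (\<integral>\<^sup>+ w. ennreal (exp (- lam * (1 - P (b - 1)) * S 0 w)) \<partial>Pr)"
      by (rule integral_eq_nn_integral[OF fm]) simp
    also have "(\<integral>\<^sup>+ w. ennreal (exp (- lam * (1 - P (b - 1)) * S 0 w)) \<partial>Pr) = ennreal (P b)"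
      using main[OF b] by simp
    also have "enn2real (ennreal (P b)) = P b" using P01(1) by simp
    finally show "P b = expectation (\<lambda>w. exp (- lam * (1 - P (b - 1)) * S 0 w))" by simp
  qed
qed


end
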